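(* Let $0\le a<b\le1$, $A=(a,b)$, and $X_{i,j}=\mu_j+\sigma_j(\cos(\gamma_j)V_i+\sin(\gamma_j)W_i)$, $j=1,2$, with $\mu_j\in\mathbb{R}$, $\sigma_j>0$, $\gamma_j\in[-\pi,\pi)$. Then $\hat\mu_{A,j}\to\mu_{A,j}$ ($j=1,2$) and $\hat r_A\to r_A$ in probability as $n\to\infty$.
   Context: $(V_i,W_i)_{i\ge1}$ are i.i.d., with $V_i,W_i$ independent standard normal. For fixed $n$, $X_{(i)}=(X_{(i),1},X_{(i),2})$ is the observation whose $V$-value is the $i$-th smallest among $V_1,\dots,V_n$. $\Phi$ is the standard normal CDF, $[x]$ the integer part, $m_n=[nb]-[na]$, $\hat\mu_{A,j}=\frac1{m_n}\sum_{i=[na]+1}^{[nb]}X_{(i),j}$, $\hat r_A=\frac1{m_n}\sum_{i=[na]+1}^{[nb]}(X_{(i),1}-\hat\mu_{A,1})(X_{(i),2}-\hat\mu_{A,2})$. With $A_V=(\Phi^{-1}(a),\Phi^{-1}(b))$, $\lambda_{A,1}=\mathbb{E}[V_1\mid V_1\in A_V]$, $\lambda_{A,2}=\mathbb{E}[V_1^2\mid V_1\in A_V]$: $\mu_{A,j}=\mu_j+\sigma_j\cos(\gamma_j)\lambda_{A,1}$ and $r_A=\sigma_1\sigma_2(\cos\gamma_1\cos\gamma_2(\lambda_{A,2}-\lambda_{A,1}^2)+\sin\gamma_1\sin\gamma_2)$. *)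

theory Defs
  imports "HOL-Probability.Probability"
begin

definition Phi :: "real \<Rightarrow> real" where
  "Phi x = (LBINT t:{..x}. std_normal_density t)"

text \<open>A_V = (Phi^-1(a), Phi^-1(b)), written as the preimage of (a,b) under Phi
  (Phi is a strictly increasing bijection from R onto (0,1); Phi^-1(0) = -infinity,
  Phi^-1(1) = +infinity).\<close>
definition A_V :: "real \<Rightarrow> real \<Rightarrow> real set" where
  "A_V a b = {x. a < Phi x \<and> Phi x < b}"

definition lam :: "nat \<Rightarrow> real \<Rightarrow> real \<Rightarrow> real" where
  "lam k a b = (LBINT x:A_V a b. x ^ k * std_normal_density x)
             / (LBINT x:A_V a b. std_normal_density x)"

definition ord_idx :: "(nat \<Rightarrow> real) \<Rightarrow> nat \<Rightarrow> nat list" where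
  "ord_idx v n = sort_key v [1..<n+1]"

text \<open>Concomitant: x_(i), the x-value of the observation whose v-value is the i-th smallest (i \<ge> 1).\<close>
definition conc :: "(nat \<Rightarrow> real) \<Rightarrow> (nat \<Rightarrow> real) \<Rightarrow> nat \<Rightarrow> nat \<Rightarrow> real" where
  "conc v x n i = x (ord_idx v n ! (i - 1))"

definition trim_idx :: "real \<Rightarrow> real \<Rightarrow> nat \<Rightarrow> nat set" where
  "trim_idx a b n = {nat \<lfloor>real n * a\<rfloor> + 1 .. nat \<lfloor>real n * b\<rfloor>}"

definition m_n :: "real \<Rightarrow> real \<Rightarrow> nat \<Rightarrow> nat" where
  "m_n a b n = nat \<lfloor>real n * b\<rfloor> - nat \<lfloor>real n * a\<rfloor>"

definition trim_mean :: "(nat \<Rightarrow> real) \<Rightarrow> (nat \<Rightarrow> real) \<Rightarrow> real \<Rightarrow> real \<Rightarrow> nat \<Rightarrow> real" where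
  "trim_mean v x a b n = (\<Sum>i\<in>trim_idx a b n. conc v x n i) / real (m_n a b n)"

definition trim_cov :: "(nat \<Rightarrow> real) \<Rightarrow> (nat \<Rightarrow> real) \<Rightarrow> (nat \<Rightarrow> real) \<Rightarrow> real \<Rightarrow> real \<Rightarrow> nat \<Rightarrow> real" where
  "trim_cov v x y a b n =
     (\<Sum>i\<in>trim_idx a b n. (conc v x n i - trim_mean v x a b n) * (conc v y n i - trim_mean v y a b n))
       / real (m_n a b n)"

definition conv_in_prob :: "'a measure \<Rightarrow> (nat \<Rightarrow> 'a \<Rightarrow> real) \<Rightarrow> real \<Rightarrow> bool" where
  "conv_in_prob M Y c \<longleftrightarrow> (\<forall>n. Y n \<in> borel_measurable M) \<and>
     (\<forall>e>0. (\<lambda>n. measure M {\<omega>\<in>space M. e < \<bar>Y n \<omega> - c\<bar>}) \<longlonglongrightarrow> 0)"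

end

theory Submission
  imports Defs
begin


abbreviation "NN \<equiv> density lborel std_normal_density"

lemma integrable_phi_ind: "S \<in> sets borel \<Longrightarrow> integrable lborel (\<lambda>x. indicator S x * std_normal_density x)"
  using integrable_real_mult_indicator[of S lborel std_normal_density] by (simp add: mult.commute)

lemma measure_NN: assumes "S \<in> sets borel" shows "measure NN S = (LBINT x:S. std_normal_density x)"
proof -
  have "emeasure NN S = (\<integral>\<^sup>+x. ennreal (std_normal_density x) * indicator S x \<partial>lborel)"
    using assms by (subst emeasure_density) auto
  also have "\<dots> = (\<integral>\<^sup>+x. ennreal (indicator S x * std_normal_density x) \<partial>lborel)"
    by (intro nn_integral_cong) (auto simp: indicator_def)
  also have "\<dots> = ennreal (LBINT x:S. std_normal_density x)"
    using integrable_phi_ind[OF assms] unfolding set_lebesgue_integral_def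
    by (subst nn_integral_eq_integral) auto
  moreover have "(LBINT x:S. std_normal_density x) \<ge> 0"
    unfolding set_lebesgue_integral_def by (intro Bochner_Integration.integral_nonneg) (auto simp: indicator_def)
  ultimately show ?thesis unfolding measure_def by simp
qed

lemma real_distribution_NN: "real_distribution NN"
proof -
  interpret prob_space NN by (auto intro: prob_space_normal_density)
  show ?thesis by unfold_locales simp
qed

lemma Phi_cdf: "Phi x = cdf NN x"
  unfolding Phi_def cdf_def2 by (subst measure_NN) auto

lemma Phi_cont: "isCont Phi x"
proof -
  interpret real_distribution NN by (rule real_distribution_NN)
  have "measure NN {x} = 0"
  proof -
    have "AE t in lborel. indicator {x} t * std_normal_density t = 0"
      using AE_lborel_singleton[of x] by eventually_elim auto
    hence "(LBINT t:{x}. std_normal_density t) = 0"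
      unfolding set_lebesgue_integral_def by (subst integral_eq_zero_AE) auto
    thus ?thesis by (subst measure_NN) auto
  qed
  hence "isCont (cdf NN) x" using isCont_cdf by simp
  moreover have "Phi = cdf NN" using Phi_cdf by auto
  ultimately show ?thesis by simp
qed

lemma Phi_lim_top: "(Phi \<longlongrightarrow> 1) at_top"
proof -
  interpret real_distribution NN by (rule real_distribution_NN)
  have "Phi = cdf NN" using Phi_cdf by auto
  thus ?thesis using cdf_lim_at_top_prob by simp
qed

lemma Phi_lim_bot: "(Phi \<longlongrightarrow> 0) at_bot"
proof -
  interpret real_distribution NN by (rule real_distribution_NN)
  have "Phi = cdf NN" using Phi_cdf by auto
  thus ?thesis using cdf_lim_at_bot by simp
qed

lemma Phi_strict: assumes "x < y" shows "Phi x < Phi y"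
proof -
  interpret real_distribution NN by (rule real_distribution_NN)
  have "Phi y - Phi x = measure NN {x<..y}"
    unfolding Phi_cdf using cdf_diff_eq[OF assms] by simp
  also have "\<dots> > 0"
  proof -
    define c where "c = std_normal_density (\<bar>x\<bar> + \<bar>y\<bar>)"
    have c: "c > 0" unfolding c_def by (simp add: normal_density_pos)
    have "\<forall>t\<in>{x<..y}. c \<le> std_normal_density t"
    proof
      fix t assume t: "t \<in> {x<..y}"
      have "t\<^sup>2 \<le> (\<bar>x\<bar> + \<bar>y\<bar>)\<^sup>2" using t
        using abs_le_square_iff[of t "\<bar>x\<bar> + \<bar>y\<bar>"] by auto
      thus "c \<le> std_normal_density t" unfolding c_def std_normal_density_def
        by (intro mult_left_mono) auto
    qed
    have "(LBINT t:{x<..y}. c) \<le> (LBINT t:{x<..y}. std_normal_density t)"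
      using \<open>\<forall>t\<in>{x<..y}. c \<le> std_normal_density t\<close>
    proof (intro set_integral_mono)
      have "integrable lborel (\<lambda>t. c * indicator {x<..y} t)"
        using assms by (intro integrable_mult_right integrable_real_indicator) auto
      thus "set_integrable lborel {x<..y} (\<lambda>t. c)" unfolding set_integrable_def
        by (simp add: mult.commute)
      show "set_integrable lborel {x<..y} std_normal_density"
        using integrable_phi_ind[of "{x<..y}"] unfolding set_integrable_def by simp
    qed auto
    moreover have "(LBINT t:{x<..y}. c) = c * (y - x)"
    proof -
      have "(LBINT t:{x<..y}. c) = (\<integral>t. c * indicator {x<..y} t \<partial>lborel)"
        by (simp add: set_lebesgue_integral_def mult.commute)
      also have "\<dots> = c * measure lborel {x<..y}"
        by (simp only: integral_mult_right_zero Bochner_Integration.integral_indicator space_lborel space_borel Int_UNIV_right)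
      also have "measure lborel {x<..y} = y - x" using assms by (simp only: measure_lborel_Ioc)
      finally show ?thesis by simp
    qed
    moreover have "c * (y - x) > 0" using c assms by simp
    moreover have "measure NN {x<..y} = (LBINT t:{x<..y}. std_normal_density t)"
      by (rule measure_NN) simp
    ultimately show ?thesis by linarith
  qed
  finally show ?thesis by simp
qed

lemma Phi_mono: "x \<le> y \<Longrightarrow> Phi x \<le> Phi y"
  using Phi_strict[of x y] by (cases "x = y") auto

lemma Phi_pos: "0 < Phi x"
proof -
  interpret real_distribution NN by (rule real_distribution_NN)
  have "0 \<le> Phi (x - 1)" unfolding Phi_cdf by (rule cdf_nonneg)
  also have "\<dots> < Phi x" by (rule Phi_strict) simp
  finally show ?thesis .
qed

lemma Phi_lt1: "Phi x < 1"
proof -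
  interpret real_distribution NN by (rule real_distribution_NN)
  have "Phi x < Phi (x + 1)" by (rule Phi_strict) simp
  also have "\<dots> \<le> 1" unfolding Phi_cdf by (rule cdf_bounded_prob)
  finally show ?thesis .
qed

lemma Phi_measurable[measurable]: "Phi \<in> borel_measurable borel"
  by (intro borel_measurable_continuous_onI continuous_at_imp_continuous_on ballI Phi_cont)

lemma Phi_surj: assumes "0 < b" "b < 1" shows "\<exists>q. Phi q = b"
proof -
  have "eventually (\<lambda>x. Phi x < b) at_bot"
    using order_tendstoD(2)[OF Phi_lim_bot assms(1)] .
  then obtain x0 where x0: "Phi x0 < b" by (auto simp: eventually_at_bot_linorder)
  have "eventually (\<lambda>x. Phi x > b) at_top"
    using order_tendstoD(1)[OF Phi_lim_top assms(2)] .
  then obtain N where N: "\<forall>n\<ge>N. Phi n > b" by (auto simp: eventually_at_top_linorder)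
  define x1 where "x1 = max N x0"
  have x1: "x1 \<ge> x0" "Phi x1 > b" using N unfolding x1_def by auto
  show ?thesis using IVT[of Phi x0 b x1] x0 x1 Phi_cont by force
qed

lemma measure_NN_lt: assumes "0 < b" "b \<le> 1" shows "measure NN {x. Phi x < b} = b"
proof (cases "b = 1")
  case True
  interpret real_distribution NN by (rule real_distribution_NN)
  have "{x. Phi x < b} = space NN" using True Phi_lt1 by auto
  thus ?thesis using True prob_space by simp
next
  case False
  interpret real_distribution NN by (rule real_distribution_NN)
  obtain q where q: "Phi q = b" using Phi_surj assms False by force
  have "{x. Phi x < b} = {..<q}"
    using q Phi_strict Phi_mono by (auto simp: not_less[symmetric])
  moreover have "measure NN {..<q} = measure NN {..q}"
  proof -
    have "measure NN {..q} = measure NN {..<q} + measure NN {q}"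
      by (subst finite_measure_Union[symmetric]) (auto intro!: arg_cong[where f="measure NN"])
    moreover have "measure NN {q} = 0" by (subst measure_NN) (auto simp: set_lebesgue_integral_def
       intro!: integral_eq_zero_AE eventually_mono[OF AE_lborel_singleton[of q]])
    ultimately show ?thesis by simp
  qed
  ultimately show ?thesis using q unfolding Phi_cdf cdf_def2 by simp
qed

lemma measure_NN_le: assumes "0 \<le> a" "a < 1" shows "measure NN {x. Phi x \<le> a} = a"
proof (cases "a = 0")
  case True
  have "{x. Phi x \<le> a} = {}" using True Phi_pos by (auto simp: not_le[symmetric])
  thus ?thesis using True by simp
next
  case False
  obtain q where q: "Phi q = a" using Phi_surj assms False by force
  have "{x. Phi x \<le> a} = {..q}"
    using q Phi_strict Phi_mono by (auto simp: not_le[symmetric])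
  thus ?thesis using q unfolding Phi_cdf cdf_def2 by simp
qed

lemma A_V_eq: "A_V a b = {x. Phi x < b} - {x. Phi x \<le> a}"
  unfolding A_V_def by auto

lemma A_V_measurable[measurable]: "A_V a b \<in> sets borel"
  unfolding A_V_def by measurable

lemma measure_NN_A_V: assumes "0 \<le> a" "a < b" "b \<le> 1"
  shows "measure NN (A_V a b) = b - a"
proof -
  interpret real_distribution NN by (rule real_distribution_NN)
  have "measure NN (A_V a b) = measure NN {x. Phi x < b} - measure NN {x. Phi x \<le> a}"
    unfolding A_V_eq using assms by (intro finite_measure_Diff) auto
  thus ?thesis using assms measure_NN_lt measure_NN_le by simp
qed


lemma insort_key_cong: "(\<forall>y\<in>set (x#ys). f y = g y) \<Longrightarrow> insort_key f x ys = insort_key g x ys"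
  by (induction ys) auto

lemma sort_key_cong: "(\<forall>x\<in>set xs. f x = g x) \<Longrightarrow> sort_key f xs = sort_key g xs"
proof (induction xs)
  case Nil then show ?case by simp
next
  case (Cons a xs)
  then have "sort_key f xs = sort_key g xs" by simp
  then show ?case using Cons.prems by (simp add: insort_key_cong)
qed

lemma prefix_set:
  assumes d: "distinct \<pi>" and s: "sorted (map f \<pi>)" and S: "S \<subseteq> set \<pi>"
    and dc: "\<forall>s\<in>S. \<forall>t\<in>set \<pi> - S. f s < f t"
  shows "set (take (card S) \<pi>) = S"
proof -
  let ?k = "card S"
  have fin: "finite S" using S finite_subset by blast
  have kl: "?k \<le> length \<pi>" using card_mono[OF _ S] distinct_card[OF d] by simp
  have ct: "card (set (take ?k \<pi>)) = ?k"
    using distinct_card[of "take ?k \<pi>"] d kl by (simp add: distinct_take)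
  have sub: "S \<subseteq> set (take ?k \<pi>)"
  proof
    fix x assume x: "x \<in> S"
    show "x \<in> set (take ?k \<pi>)"
    proof (rule ccontr)
      assume nx: "x \<notin> set (take ?k \<pi>)"
      obtain j where j: "j < length \<pi>" "\<pi> ! j = x" using x S by (metis in_set_conv_nth subsetD)
      have jk: "j \<ge> ?k"
      proof (rule ccontr)
        assume "\<not> ?k \<le> j"
        hence "x \<in> set (take ?k \<pi>)" using j by (auto simp: in_set_conv_nth intro!: exI[of _ j])
        thus False using nx by simp
      qed
      have "\<not> set (take ?k \<pi>) \<subseteq> S"
      proof
        assume "set (take ?k \<pi>) \<subseteq> S"
        hence "set (take ?k \<pi>) = S" using ct fin by (intro card_subset_eq) auto
        thus False using x nx by simp
      qed
      then obtain y where y: "y \<in> set (take ?k \<pi>)" "y \<notin> S" by auto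
      obtain j' where j': "j' < ?k" "\<pi> ! j' = y" using y kl by (auto simp: in_set_conv_nth)
      have "f y \<le> f x" using s j j' jk
        using sorted_nth_mono[OF s, of j' j] by simp
      moreover have "y \<in> set \<pi>" using y(1) by (meson in_set_takeD)
      hence "f x < f y" using dc x y by auto
      ultimately show False by simp
    qed
  qed
  show ?thesis using card_subset_eq[OF _ sub] ct by simp
qed

lemma sum_nth_distinct:
  assumes "distinct \<pi>" "k \<le> length \<pi>"
  shows "(\<Sum>j<k. g (\<pi> ! j)) = sum g (set (take k \<pi>))"
proof -
  have "(\<Sum>j<k. g (\<pi> ! j)) = (\<Sum>j<k. g (take k \<pi> ! j))"
    by (intro sum.cong) auto
  also have "\<dots> = sum_list (map g (take k \<pi>))"
    using assms by (simp add: sum_list_sum_nth atLeast0LessThan min_def)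
  also have "\<dots> = sum g (set (take k \<pi>))"
    using assms by (intro sum_list_distinct_conv_sum_set) (simp add: distinct_take)
  finally show ?thesis .
qed

lemma sum_prefix:
  assumes "distinct \<pi>" and "sorted (map f \<pi>)" and S: "S \<subseteq> set \<pi>"
    and "\<forall>s\<in>S. \<forall>t\<in>set \<pi> - S. f s < f t"
  shows "(\<Sum>j<card S. g (\<pi> ! j)) = sum g S"
proof -
  have "card S \<le> length \<pi>" using card_mono[OF _ S] distinct_card[OF assms(1)] by simp
  hence "(\<Sum>j<card S. g (\<pi> ! j)) = sum g (set (take (card S) \<pi>))"
    by (rule sum_nth_distinct[OF assms(1)])
  thus ?thesis using prefix_set[OF assms] by simp
qed

lemma sum_lessThan_diff:
  fixes h :: "nat \<Rightarrow> real"
  shows "\<bar>(\<Sum>j<u. h j) - (\<Sum>j<v. h j)\<bar> \<le> (\<Sum>j\<in>{min u v..<max u v}. \<bar>h j\<bar>)"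
proof -
  have *: "(\<Sum>j<y. h j) - (\<Sum>j<x. h j) = (\<Sum>j\<in>{x..<y}. h j)" if "x \<le> y" for x y
    using sum_diff_nat_ivl[of 0 x y h] that by (simp add: atLeast0LessThan)
  show ?thesis
  proof (cases "u \<le> v")
    case True
    have "\<bar>(\<Sum>j<u. h j) - (\<Sum>j<v. h j)\<bar> = \<bar>\<Sum>j\<in>{u..<v}. h j\<bar>"
      using *[OF True] by simp
    also have "\<dots> \<le> (\<Sum>j\<in>{u..<v}. \<bar>h j\<bar>)" by (rule sum_abs)
    finally show ?thesis using True by simp
  next
    case False
    have "\<bar>(\<Sum>j<u. h j) - (\<Sum>j<v. h j)\<bar> = \<bar>\<Sum>j\<in>{v..<u}. h j\<bar>"
      using *[of v u] False by simp
    also have "\<dots> \<le> (\<Sum>j\<in>{v..<u}. \<bar>h j\<bar>)" by (rule sum_abs)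
    finally show ?thesis using False by simp
  qed
qed

lemma interval_sum_diff:
  fixes h :: "nat \<Rightarrow> real"
  assumes "p \<le> r" "\<alpha> \<le> \<beta>"
  shows "\<bar>(\<Sum>j\<in>{p..<r}. h j) - (\<Sum>j\<in>{\<alpha>..<\<beta>}. h j)\<bar>
     \<le> (\<Sum>j\<in>{min p \<alpha>..<max p \<alpha>}. \<bar>h j\<bar>) + (\<Sum>j\<in>{min r \<beta>..<max r \<beta>}. \<bar>h j\<bar>)"
proof -
  have *: "(\<Sum>j\<in>{x..<y}. h j) = (\<Sum>j<y. h j) - (\<Sum>j<x. h j)" if "x \<le> y" for x y
    using sum_diff_nat_ivl[of 0 x y h] that by (simp add: atLeast0LessThan)
  have "\<bar>(\<Sum>j\<in>{p..<r}. h j) - (\<Sum>j\<in>{\<alpha>..<\<beta>}. h j)\<bar>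
      = \<bar>((\<Sum>j<r. h j) - (\<Sum>j<\<beta>. h j)) - ((\<Sum>j<p. h j) - (\<Sum>j<\<alpha>. h j))\<bar>"
    using *[OF assms(1)] *[OF assms(2)] by simp
  also have "\<dots> \<le> \<bar>(\<Sum>j<r. h j) - (\<Sum>j<\<beta>. h j)\<bar> + \<bar>(\<Sum>j<p. h j) - (\<Sum>j<\<alpha>. h j)\<bar>"
    by (rule abs_triangle_ineq4)
  finally show ?thesis using sum_lessThan_diff[of h r \<beta>] sum_lessThan_diff[of h p \<alpha>] by linarith
qed

lemma abs_le_amgm: fixes x c :: real assumes "c > 0" shows "\<bar>x\<bar> \<le> c + x\<^sup>2 / c"
proof -
  have "c * \<bar>x\<bar> \<le> c\<^sup>2 + x\<^sup>2"
  proof -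
    have "0 \<le> (c - \<bar>x\<bar>)\<^sup>2 + c * \<bar>x\<bar>" using assms by simp
    thus ?thesis by (simp add: power2_eq_square algebra_simps)
  qed
  thus ?thesis using assms by (simp add: field_simps power2_eq_square)
qed

lemma sum_abs_amgm:
  fixes h :: "nat \<Rightarrow> real" and c :: real
  assumes "c > 0" "I \<subseteq> {..<n}"
  shows "(\<Sum>j\<in>I. \<bar>h j\<bar>) \<le> c * card I + (\<Sum>j<n. (h j)\<^sup>2) / c"
proof -
  have fin: "finite I" using assms finite_subset by blast
  have "(\<Sum>j\<in>I. \<bar>h j\<bar>) \<le> (\<Sum>j\<in>I. c + (h j)\<^sup>2 / c)"
    by (intro sum_mono abs_le_amgm assms)
  also have "\<dots> = c * card I + (\<Sum>j\<in>I. (h j)\<^sup>2) / c"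
    by (simp add: sum.distrib sum_divide_distrib)
  also have "(\<Sum>j\<in>I. (h j)\<^sup>2) \<le> (\<Sum>j<n. (h j)\<^sup>2)"
    using assms by (intro sum_mono2) auto
  hence "c * card I + (\<Sum>j\<in>I. (h j)\<^sup>2) / c \<le> c * card I + (\<Sum>j<n. (h j)\<^sup>2) / c"
    using assms by (simp add: divide_right_mono)
  finally show ?thesis .
qed


lemma key_mult: fixes x y c d \<delta> e :: real
  assumes dpos: "\<delta> > 0" and d1: "\<delta> \<le> 1" and de: "\<delta> * (1 + \<bar>c\<bar> + \<bar>d\<bar>) \<le> e"
   and that: "\<bar>x - c\<bar> \<le> \<delta>" "\<bar>y - d\<bar> \<le> \<delta>"
  shows "\<bar>x * y - c * d\<bar> \<le> e"
  proof -
    have eq: "x * y - c * d = (x - c) * (y - d) + c * (y - d) + d * (x - c)" by (simp add: algebra_simps)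
    have t1: "\<bar>(x-c)*(y-d) + c*(y-d) + d*(x-c)\<bar> \<le> \<bar>(x-c)*(y-d) + c*(y-d)\<bar> + \<bar>d*(x-c)\<bar>"
      by (rule abs_triangle_ineq)
    have t2: "\<bar>(x-c)*(y-d) + c*(y-d)\<bar> \<le> \<bar>(x-c)*(y-d)\<bar> + \<bar>c*(y-d)\<bar>"
      by (rule abs_triangle_ineq)
    have "\<bar>x * y - c * d\<bar> \<le> \<bar>x - c\<bar> * \<bar>y - d\<bar> + \<bar>c\<bar> * \<bar>y - d\<bar> + \<bar>d\<bar> * \<bar>x - c\<bar>"
      using t1 t2 unfolding eq abs_mult by linarith
    also have "\<dots> \<le> \<delta> * \<delta> + \<bar>c\<bar> * \<delta> + \<bar>d\<bar> * \<delta>"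
    proof -
      have "\<bar>x - c\<bar> * \<bar>y - d\<bar> \<le> \<delta> * \<delta>" by (rule mult_mono) (use that dpos in auto)
      moreover have "\<bar>c\<bar> * \<bar>y - d\<bar> \<le> \<bar>c\<bar> * \<delta>" by (rule mult_left_mono) (use that in auto)
      moreover have "\<bar>d\<bar> * \<bar>x - c\<bar> \<le> \<bar>d\<bar> * \<delta>" by (rule mult_left_mono) (use that in auto)
      ultimately show ?thesis by linarith
    qed
    also have "\<dots> \<le> \<delta> * (1 + \<bar>c\<bar> + \<bar>d\<bar>)"
    proof -
      have "\<delta> * \<delta> \<le> \<delta> * 1" by (rule mult_left_mono[OF d1]) (use dpos in simp)
      moreover have "\<delta> * (1 + \<bar>c\<bar> + \<bar>d\<bar>) = \<delta> * 1 + \<bar>c\<bar> * \<delta> + \<bar>d\<bar> * \<delta>"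
        by (simp add: algebra_simps)
      ultimately show ?thesis by linarith
    qed
    finally show ?thesis using de by linarith
  qed

context prob_space begin

lemma meas_le2: assumes "A \<subseteq> B \<union> C" "B \<in> events" "C \<in> events"
  shows "prob A \<le> prob B + prob C"
proof -
  have "prob A \<le> prob (B \<union> C)" using assms by (intro finite_measure_mono) auto
  also have "\<dots> \<le> prob B + prob C" using assms by (intro measure_subadditive) auto
  finally show ?thesis .
qed


lemma cip_cong:
  assumes "conv_in_prob M Y c" "\<And>n \<omega>. \<omega> \<in> space M \<Longrightarrow> X n \<omega> = Y n \<omega>"
  shows "conv_in_prob M X c"
proof -
  have m: "X n \<in> borel_measurable M" for n
  proof -
    have "X n \<in> borel_measurable M \<longleftrightarrow> Y n \<in> borel_measurable M"
      by (rule measurable_cong) (rule assms(2))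
    thus ?thesis using assms(1) unfolding conv_in_prob_def by blast
  qed
  have "{\<omega>\<in>space M. e < \<bar>X n \<omega> - c\<bar>} = {\<omega>\<in>space M. e < \<bar>Y n \<omega> - c\<bar>}" for n e
    using assms(2) by auto
  thus ?thesis using assms(1) m unfolding conv_in_prob_def by simp
qed

lemma cip_const:
  assumes "X \<longlonglongrightarrow> c"
  shows "conv_in_prob M (\<lambda>n \<omega>. X n) c"
  unfolding conv_in_prob_def
proof (intro conjI allI impI)
  fix e :: real assume e: "e > 0"
  have "eventually (\<lambda>n. dist (X n) c < e) sequentially"
    using assms e by (rule tendstoD)
  hence "eventually (\<lambda>n. prob {\<omega>\<in>space M. e < \<bar>X n - c\<bar>} = 0) sequentially"
    by eventually_elim (auto simp: dist_real_def)
  thus "(\<lambda>n. prob {\<omega>\<in>space M. e < \<bar>X n - c\<bar>}) \<longlonglongrightarrow> 0"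
    by (rule tendsto_eventually)
qed simp

lemma cip_add:
  assumes X: "conv_in_prob M X c" and Y: "conv_in_prob M Y d"
  shows "conv_in_prob M (\<lambda>n \<omega>. X n \<omega> + Y n \<omega>) (c + d)"
  unfolding conv_in_prob_def
proof (intro conjI allI impI)
  fix n have "X n \<in> borel_measurable M" "Y n \<in> borel_measurable M"
    using X Y unfolding conv_in_prob_def by auto
  thus "(\<lambda>\<omega>. X n \<omega> + Y n \<omega>) \<in> borel_measurable M" by (rule borel_measurable_add)
next
  fix e :: real assume e: "e > 0"
  have mX[measurable]: "X n \<in> borel_measurable M" and mY[measurable]: "Y n \<in> borel_measurable M" for n
    using X Y unfolding conv_in_prob_def by auto
  have lx: "(\<lambda>n. prob {\<omega>\<in>space M. e/2 < \<bar>X n \<omega> - c\<bar>}) \<longlonglongrightarrow> 0"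
    using X half_gt_zero[OF e] unfolding conv_in_prob_def by blast
  have ly: "(\<lambda>n. prob {\<omega>\<in>space M. e/2 < \<bar>Y n \<omega> - d\<bar>}) \<longlonglongrightarrow> 0"
    using Y half_gt_zero[OF e] unfolding conv_in_prob_def by blast
  have le: "prob {\<omega>\<in>space M. e < \<bar>X n \<omega> + Y n \<omega> - (c + d)\<bar>}
      \<le> prob {\<omega>\<in>space M. e/2 < \<bar>X n \<omega> - c\<bar>} + prob {\<omega>\<in>space M. e/2 < \<bar>Y n \<omega> - d\<bar>}" for n
  proof (rule meas_le2)
    show "{\<omega> \<in> space M. e < \<bar>X n \<omega> + Y n \<omega> - (c + d)\<bar>}
      \<subseteq> {\<omega> \<in> space M. e / 2 < \<bar>X n \<omega> - c\<bar>} \<union> {\<omega> \<in> space M. e / 2 < \<bar>Y n \<omega> - d\<bar>}"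
    proof
      fix \<omega> assume w: "\<omega> \<in> {\<omega> \<in> space M. e < \<bar>X n \<omega> + Y n \<omega> - (c + d)\<bar>}"
      have t: "\<bar>X n \<omega> + Y n \<omega> - (c+d)\<bar> \<le> \<bar>X n \<omega> - c\<bar> + \<bar>Y n \<omega> - d\<bar>"
      proof -
        have "X n \<omega> + Y n \<omega> - (c+d) = (X n \<omega> - c) + (Y n \<omega> - d)" by simp
        thus ?thesis using abs_triangle_ineq[of "X n \<omega> - c" "Y n \<omega> - d"] by simp
      qed
      moreover have "e < \<bar>X n \<omega> + Y n \<omega> - (c+d)\<bar>" using w by simp
      ultimately have "e/2 < \<bar>X n \<omega> - c\<bar> \<or> e/2 < \<bar>Y n \<omega> - d\<bar>" by linarith
      thus "\<omega> \<in> {\<omega> \<in> space M. e / 2 < \<bar>X n \<omega> - c\<bar>} \<union> {\<omega> \<in> space M. e / 2 < \<bar>Y n \<omega> - d\<bar>}"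
        using w by blast
    qed
  qed measurable
  show "(\<lambda>n. prob {\<omega>\<in>space M. e < \<bar>X n \<omega> + Y n \<omega> - (c + d)\<bar>}) \<longlonglongrightarrow> 0"
    apply (rule tendsto_sandwich[of "\<lambda>_. 0" _ _ "\<lambda>n. prob {\<omega>\<in>space M. e/2 < \<bar>X n \<omega> - c\<bar>} + prob {\<omega>\<in>space M. e/2 < \<bar>Y n \<omega> - d\<bar>}"])
    apply (simp add: measure_nonneg)
    apply (rule always_eventually, rule allI, rule le)
    apply (rule tendsto_const)
    apply (rule tendsto_add_zero[OF lx ly])
    done
qed

lemma cip_mult:
  assumes X: "conv_in_prob M X c" and Y: "conv_in_prob M Y d"
  shows "conv_in_prob M (\<lambda>n \<omega>. X n \<omega> * Y n \<omega>) (c * d)"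
  unfolding conv_in_prob_def
proof (intro conjI allI impI)
  fix n have "X n \<in> borel_measurable M" "Y n \<in> borel_measurable M"
    using X Y unfolding conv_in_prob_def by auto
  thus "(\<lambda>\<omega>. X n \<omega> * Y n \<omega>) \<in> borel_measurable M" by (rule borel_measurable_times)
next
  fix e :: real assume e: "e > 0"
  have mX[measurable]: "X n \<in> borel_measurable M" and mY[measurable]: "Y n \<in> borel_measurable M" for n
    using X Y unfolding conv_in_prob_def by auto
  define \<delta> where "\<delta> = min 1 (e / (1 + \<bar>c\<bar> + \<bar>d\<bar>))"
  have dpos: "\<delta> > 0" using e unfolding \<delta>_def by auto
  have d1: "\<delta> \<le> 1" unfolding \<delta>_def by auto
  have de: "\<delta> * (1 + \<bar>c\<bar> + \<bar>d\<bar>) \<le> e"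
  proof -
    have "\<delta> \<le> e / (1 + \<bar>c\<bar> + \<bar>d\<bar>)" unfolding \<delta>_def by auto
    thus ?thesis by (simp add: field_simps add_pos_nonneg)
  qed
  have lx: "(\<lambda>n. prob {\<omega>\<in>space M. \<delta> < \<bar>X n \<omega> - c\<bar>}) \<longlonglongrightarrow> 0"
    using X dpos unfolding conv_in_prob_def by simp
  have ly: "(\<lambda>n. prob {\<omega>\<in>space M. \<delta> < \<bar>Y n \<omega> - d\<bar>}) \<longlonglongrightarrow> 0"
    using Y dpos unfolding conv_in_prob_def by simp
  have key: "\<bar>x * y - c * d\<bar> \<le> e" if "\<bar>x - c\<bar> \<le> \<delta>" "\<bar>y - d\<bar> \<le> \<delta>" for x y
    using key_mult[OF dpos d1 de that] .
  have le: "prob {\<omega>\<in>space M. e < \<bar>X n \<omega> * Y n \<omega> - c * d\<bar>}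
      \<le> prob {\<omega>\<in>space M. \<delta> < \<bar>X n \<omega> - c\<bar>} + prob {\<omega>\<in>space M. \<delta> < \<bar>Y n \<omega> - d\<bar>}" for n
  proof (rule meas_le2)
    show "{\<omega> \<in> space M. e < \<bar>X n \<omega> * Y n \<omega> - c * d\<bar>}
       \<subseteq> {\<omega> \<in> space M. \<delta> < \<bar>X n \<omega> - c\<bar>} \<union> {\<omega> \<in> space M. \<delta> < \<bar>Y n \<omega> - d\<bar>}"
    proof
      fix \<omega> assume w: "\<omega> \<in> {\<omega> \<in> space M. e < \<bar>X n \<omega> * Y n \<omega> - c * d\<bar>}"
      have ew: "e < \<bar>X n \<omega> * Y n \<omega> - c * d\<bar>" using w by simp
      have "\<delta> < \<bar>X n \<omega> - c\<bar> \<or> \<delta> < \<bar>Y n \<omega> - d\<bar>"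
      proof (rule ccontr)
        assume "\<not> (\<delta> < \<bar>X n \<omega> - c\<bar> \<or> \<delta> < \<bar>Y n \<omega> - d\<bar>)"
        hence "\<bar>X n \<omega> - c\<bar> \<le> \<delta>" "\<bar>Y n \<omega> - d\<bar> \<le> \<delta>" by linarith+
        from key[OF this] ew show False by linarith
      qed
      thus "\<omega> \<in> {\<omega> \<in> space M. \<delta> < \<bar>X n \<omega> - c\<bar>} \<union> {\<omega> \<in> space M. \<delta> < \<bar>Y n \<omega> - d\<bar>}"
        using w by blast
    qed
  qed measurable
  show "(\<lambda>n. prob {\<omega>\<in>space M. e < \<bar>X n \<omega> * Y n \<omega> - c * d\<bar>}) \<longlonglongrightarrow> 0"
    apply (rule tendsto_sandwich[of "\<lambda>_. 0" _ _ "\<lambda>n. prob {\<omega>\<in>space M. \<delta> < \<bar>X n \<omega> - c\<bar>} + prob {\<omega>\<in>space M. \<delta> < \<bar>Y n \<omega> - d\<bar>}"])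
    apply (simp add: measure_nonneg)
    apply (rule always_eventually, rule allI, rule le)
    apply (rule tendsto_const)
    apply (rule tendsto_add_zero[OF lx ly])
    done
qed

lemma cip_scale:
  assumes "conv_in_prob M X c"
  shows "conv_in_prob M (\<lambda>n \<omega>. k * X n \<omega>) (k * c)"
  using cip_mult[OF cip_const[of "\<lambda>_. k" k] assms] by simp

lemma cip_diff:
  assumes X: "conv_in_prob M X c" and Y: "conv_in_prob M Y d"
  shows "conv_in_prob M (\<lambda>n \<omega>. X n \<omega> - Y n \<omega>) (c - d)"
  using cip_add[OF X cip_scale[OF Y, of "-1"]] by simp

lemma cip_dom:
  assumes mX: "\<And>n. X n \<in> borel_measurable M"
    and D: "conv_in_prob M D 0"
    and mQ: "\<And>n. Q n \<in> borel_measurable M"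
    and Qint: "\<And>n. integrable M (Q n)" and Qnn: "\<And>n \<omega>. \<omega> \<in> space M \<Longrightarrow> 0 \<le> Q n \<omega>"
    and Qs: "\<And>n. expectation (Q n) \<le> s"
    and dom: "\<And>c n \<omega>. c > 0 \<Longrightarrow> \<omega> \<in> space M \<Longrightarrow> \<bar>X n \<omega> - x0\<bar> \<le> c * D n \<omega> + Q n \<omega> / c"
  shows "conv_in_prob M X x0"
  unfolding conv_in_prob_def
proof (intro conjI allI impI)
  fix n show "X n \<in> borel_measurable M" by (rule mX)
next
  fix e :: real assume e: "e > 0"
  have mD[measurable]: "D n \<in> borel_measurable M" for n using D unfolding conv_in_prob_def by auto
  note [measurable] = mX mQ
  have "0 \<le> expectation (Q 0)" by (rule Bochner_Integration.integral_nonneg) (rule Qnn)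
  hence s0: "s \<ge> 0" using Qs[of 0] by linarith
  show "(\<lambda>n. prob {\<omega>\<in>space M. e < \<bar>X n \<omega> - x0\<bar>}) \<longlonglongrightarrow> 0"
  proof (rule LIMSEQ_I)
    fix r :: real assume r: "r > 0"
    define c where "c = 4 * (s + 1) / (e * r)"
    have c: "c > 0" unfolding c_def using e r s0 by auto
    have lD: "(\<lambda>n. prob {\<omega>\<in>space M. e / (2 * c) < \<bar>D n \<omega> - 0\<bar>}) \<longlonglongrightarrow> 0"
    proof -
      have pos: "e / (2 * c) > 0" using e c by simp
      thus ?thesis using D unfolding conv_in_prob_def by blast
    qed
    from LIMSEQ_D[OF lD, of "r/2"] r obtain N where
      N0: "\<And>n. n \<ge> N \<Longrightarrow> norm (prob {\<omega>\<in>space M. e / (2 * c) < \<bar>D n \<omega> - 0\<bar>} - 0) < r / 2"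
      by auto
    have N: "prob {\<omega>\<in>space M. e / (2 * c) < \<bar>D n \<omega> - 0\<bar>} < r / 2" if "n \<ge> N" for n
      using N0[OF that] by simp
    have "norm (prob {\<omega>\<in>space M. e < \<bar>X n \<omega> - x0\<bar>} - 0) < r" if n: "n \<ge> N" for n
    proof -
      have mk: "prob {\<omega>\<in>space M. c * e / 2 \<le> Q n \<omega>} \<le> expectation (Q n) / (c * e / 2)"
        by (rule integral_Markov_inequality_measure[where A="space M"]) (use c e Qnn Qint in auto)
      also have "\<dots> \<le> s / (c * e / 2)" using c e Qs by (intro divide_right_mono) auto
      also have "\<dots> < r / 2"
      proof -
        have ce: "c * e / 2 = 2 * (s + 1) / r" unfolding c_def using e r s0 by (simp add: field_simps)
        have "s < s + 1" by simp
        hence "s * r < (s + 1) * r" using r by (intro mult_strict_right_mono)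
        hence "s * r / (2 * (s + 1)) < r / 2" using s0 by (simp add: divide_simps algebra_simps)
        moreover have "s / (c * e / 2) = s * r / (2 * (s + 1))" unfolding ce using r s0 by (simp add: divide_simps)
        ultimately show ?thesis by simp
      qed
      finally have mk: "prob {\<omega>\<in>space M. c * e / 2 \<le> Q n \<omega>} < r / 2" .
      have "prob {\<omega>\<in>space M. e < \<bar>X n \<omega> - x0\<bar>}
          \<le> prob {\<omega>\<in>space M. e / (2 * c) < \<bar>D n \<omega> - 0\<bar>} + prob {\<omega>\<in>space M. c * e / 2 \<le> Q n \<omega>}"
      proof (rule meas_le2)
        show "{\<omega>\<in>space M. e < \<bar>X n \<omega> - x0\<bar>}
           \<subseteq> {\<omega>\<in>space M. e / (2 * c) < \<bar>D n \<omega> - 0\<bar>} \<union> {\<omega>\<in>space M. c * e / 2 \<le> Q n \<omega>}"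
        proof safe
          fix \<omega> assume w: "\<omega> \<in> space M" "e < \<bar>X n \<omega> - x0\<bar>" "\<not> c * e / 2 \<le> Q n \<omega>"
          have "e < c * D n \<omega> + Q n \<omega> / c" using dom[OF c w(1), of n] w(2) by linarith
          moreover have "Q n \<omega> / c < e / 2" using w(3) c by (simp add: field_simps)
          ultimately have "e / 2 < c * D n \<omega>" by linarith
          hence "e / (2 * c) < D n \<omega>" using c by (simp add: field_simps)
          thus "e / (2 * c) < \<bar>D n \<omega> - 0\<bar>" by simp
        qed
      qed measurable
      thus ?thesis using N[OF n] mk by simp
    qed
    thus "\<exists>N. \<forall>n\<ge>N. norm (prob {\<omega>\<in>space M. e < \<bar>X n \<omega> - x0\<bar>} - 0) < r" by blast
  qed
qed

end


context prob_space begin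

lemma wlln:
  fixes Y :: "nat \<Rightarrow> 'a \<Rightarrow> real"
  assumes meas: "\<And>i. i \<ge> 1 \<Longrightarrow> Y i \<in> borel_measurable M"
    and int1: "\<And>i. i \<ge> 1 \<Longrightarrow> integrable M (Y i)"
    and int2: "\<And>i j. i \<ge> 1 \<Longrightarrow> j \<ge> 1 \<Longrightarrow> integrable M (\<lambda>\<omega>. Y i \<omega> * Y j \<omega>)"
    and E1: "\<And>i. i \<ge> 1 \<Longrightarrow> expectation (Y i) = \<mu>"
    and E2: "\<And>i. i \<ge> 1 \<Longrightarrow> expectation (\<lambda>\<omega>. Y i \<omega> * Y i \<omega>) = s"
    and E12: "\<And>i j. i \<ge> 1 \<Longrightarrow> j \<ge> 1 \<Longrightarrow> i \<noteq> j \<Longrightarrow> expectation (\<lambda>\<omega>. Y i \<omega> * Y j \<omega>) = \<mu>\<^sup>2"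
  shows "conv_in_prob M (\<lambda>n \<omega>. (\<Sum>i\<in>{1..n}. Y i \<omega>) / real n) \<mu>"
  unfolding conv_in_prob_def
proof (intro conjI allI impI)
  fix n :: nat
  show "(\<lambda>\<omega>. (\<Sum>i\<in>{1..n}. Y i \<omega>) / real n) \<in> borel_measurable M"
    using meas by (intro borel_measurable_divide borel_measurable_sum) auto
next
  fix e :: real assume e: "e > 0"
  define a where "a i \<omega> = Y i \<omega> - \<mu>" for i \<omega>
  have inta: "integrable M (\<lambda>\<omega>. a i \<omega> * a j \<omega>)" if "i \<ge> 1" "j \<ge> 1" for i j
  proof -
    have "(\<lambda>\<omega>. a i \<omega> * a j \<omega>) = (\<lambda>\<omega>. Y i \<omega> * Y j \<omega> - \<mu> * Y j \<omega> - \<mu> * Y i \<omega> + \<mu> * \<mu>)"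
      unfolding a_def by (auto simp: algebra_simps)
    thus ?thesis using int1 int2 that by simp
  qed
  have Ea: "expectation (\<lambda>\<omega>. a i \<omega> * a j \<omega>) = (if i = j then s - \<mu>\<^sup>2 else 0)"
    if "i \<ge> 1" "j \<ge> 1" for i j
  proof -
    have "(\<lambda>\<omega>. a i \<omega> * a j \<omega>) = (\<lambda>\<omega>. Y i \<omega> * Y j \<omega> - \<mu> * Y j \<omega> - \<mu> * Y i \<omega> + \<mu> * \<mu>)"
      unfolding a_def by (auto simp: algebra_simps)
    hence "expectation (\<lambda>\<omega>. a i \<omega> * a j \<omega>) = expectation (\<lambda>\<omega>. Y i \<omega> * Y j \<omega>) - \<mu> * \<mu> - \<mu> * \<mu> + \<mu> * \<mu>"
      using int1 int2 that E1 prob_space by simp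
    thus ?thesis using that E2 E12 by (cases "i = j") (auto simp: power2_eq_square)
  qed
  have bound: "prob {\<omega>\<in>space M. e < \<bar>(\<Sum>i\<in>{1..n}. Y i \<omega>) / real n - \<mu>\<bar>} \<le> (s - \<mu>\<^sup>2) / (real n * e\<^sup>2)"
    if n: "n \<ge> 1" for n
  proof -
    define Z where "Z \<omega> = (\<Sum>i\<in>{1..n}. a i \<omega>)\<^sup>2" for \<omega>
    have Zexp: "Z \<omega> = (\<Sum>i\<in>{1..n}. \<Sum>j\<in>{1..n}. a i \<omega> * a j \<omega>)" for \<omega>
      unfolding Z_def power2_eq_square by (rule sum_product)
    have Zf: "Z = (\<lambda>\<omega>. \<Sum>i\<in>{1..n}. \<Sum>j\<in>{1..n}. a i \<omega> * a j \<omega>)" using Zexp by auto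
    have intZ: "integrable M Z" unfolding Zf
      by (intro Bochner_Integration.integrable_sum) (use inta in auto)
    have EZ: "expectation Z = real n * (s - \<mu>\<^sup>2)"
    proof -
      have "expectation Z = (\<Sum>i\<in>{1..n}. \<Sum>j\<in>{1..n}. expectation (\<lambda>\<omega>. a i \<omega> * a j \<omega>))"
      proof -
        have "expectation Z = (\<Sum>i\<in>{1..n}. expectation (\<lambda>\<omega>. \<Sum>j\<in>{1..n}. a i \<omega> * a j \<omega>))"
          unfolding Zf by (rule Bochner_Integration.integral_sum)
             (intro Bochner_Integration.integrable_sum, use inta in auto)
        also have "\<dots> = (\<Sum>i\<in>{1..n}. \<Sum>j\<in>{1..n}. expectation (\<lambda>\<omega>. a i \<omega> * a j \<omega>))"
          by (intro sum.cong refl Bochner_Integration.integral_sum) (use inta in auto)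
        finally show ?thesis .
      qed
      also have "\<dots> = (\<Sum>i\<in>{1..n}. \<Sum>j\<in>{1..n}. if i = j then s - \<mu>\<^sup>2 else 0)"
        by (intro sum.cong refl) (simp add: Ea)
      also have "\<dots> = (\<Sum>i\<in>{1..n}. s - \<mu>\<^sup>2)"
        by (intro sum.cong refl) (simp add: sum.delta)
      finally show ?thesis by simp
    qed
    have np: "real n > 0" using n by simp
    have sub: "{\<omega>\<in>space M. e < \<bar>(\<Sum>i\<in>{1..n}. Y i \<omega>) / real n - \<mu>\<bar>} \<subseteq> {\<omega>\<in>space M. (real n * e)\<^sup>2 \<le> Z \<omega>}"
    proof
      fix \<omega> assume w: "\<omega> \<in> {\<omega>\<in>space M. e < \<bar>(\<Sum>i\<in>{1..n}. Y i \<omega>) / real n - \<mu>\<bar>}"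
      have "(\<Sum>i\<in>{1..n}. a i \<omega>) = (\<Sum>i\<in>{1..n}. Y i \<omega>) - real n * \<mu>"
        unfolding a_def by (simp add: sum_subtractf)
      also have "\<dots> = real n * ((\<Sum>i\<in>{1..n}. Y i \<omega>) / real n - \<mu>)" using np by (simp add: field_simps)
      finally have "\<bar>\<Sum>i\<in>{1..n}. a i \<omega>\<bar> = real n * \<bar>(\<Sum>i\<in>{1..n}. Y i \<omega>) / real n - \<mu>\<bar>"
        using np by (simp add: abs_mult)
      moreover have "real n * e < real n * \<bar>(\<Sum>i\<in>{1..n}. Y i \<omega>) / real n - \<mu>\<bar>"
        using w np by simp
      ultimately have "real n * e \<le> \<bar>\<Sum>i\<in>{1..n}. a i \<omega>\<bar>" by simp
      hence "(real n * e)\<^sup>2 \<le> \<bar>\<Sum>i\<in>{1..n}. a i \<omega>\<bar>\<^sup>2" using np e by (intro power_mono) auto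
      thus "\<omega> \<in> {\<omega>\<in>space M. (real n * e)\<^sup>2 \<le> Z \<omega>}" using w unfolding Z_def by simp
    qed
    have measZ: "{\<omega>\<in>space M. (real n * e)\<^sup>2 \<le> Z \<omega>} \<in> events"
      using borel_measurable_integrable[OF intZ] by measurable
    have "prob {\<omega>\<in>space M. e < \<bar>(\<Sum>i\<in>{1..n}. Y i \<omega>) / real n - \<mu>\<bar>} \<le> prob {\<omega>\<in>space M. (real n * e)\<^sup>2 \<le> Z \<omega>}"
      using sub measZ by (rule finite_measure_mono)
    also have "\<dots> \<le> expectation Z / (real n * e)\<^sup>2"
    proof -
      have Znn: "\<forall>\<omega>. 0 \<le> Z \<omega>" by (simp add: Z_def)
      show ?thesis using intZ Znn np e
        by (intro integral_Markov_inequality_measure[where A="space M"]) auto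
    qed
    also have "\<dots> = (s - \<mu>\<^sup>2) / (real n * e\<^sup>2)"
      unfolding EZ using np e by (simp add: power2_eq_square field_simps)
    finally show ?thesis .
  qed
  have lim: "(\<lambda>n. (s - \<mu>\<^sup>2) / (real n * e\<^sup>2)) \<longlonglongrightarrow> 0"
  proof -
    have "(\<lambda>n. ((s - \<mu>\<^sup>2) / e\<^sup>2) * inverse (real n)) \<longlonglongrightarrow> ((s - \<mu>\<^sup>2) / e\<^sup>2) * 0"
      by (intro tendsto_mult tendsto_const tendsto_inverse_0_at_top filterlim_real_sequentially)
    thus ?thesis by (simp add: field_simps)
  qed
  show "(\<lambda>n. prob {\<omega>\<in>space M. e < \<bar>(\<Sum>i\<in>{1..n}. Y i \<omega>) / real n - \<mu>\<bar>}) \<longlonglongrightarrow> 0"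
    apply (rule tendsto_sandwich[of "\<lambda>_. 0" _ _ "\<lambda>n. (s - \<mu>\<^sup>2) / (real n * e\<^sup>2)"])
       apply (simp add: measure_nonneg)
      apply (rule eventually_sequentiallyI[of 1], rule bound, assumption)
     apply (rule tendsto_const)
    apply (rule lim)
    done
qed

end


definition EN :: "(real \<Rightarrow> real) \<Rightarrow> real" where
  "EN \<alpha> = (\<integral>x. std_normal_density x * \<alpha> x \<partial>lborel)"

definition goodf :: "(real \<Rightarrow> real) \<Rightarrow> bool" where
  "goodf \<alpha> \<longleftrightarrow> \<alpha> \<in> borel_measurable borel \<and> integrable lborel (\<lambda>x. std_normal_density x * \<alpha> x)
     \<and> integrable lborel (\<lambda>x. std_normal_density x * (\<alpha> x * \<alpha> x))"

lemma EN_indicator: "S \<in> sets borel \<Longrightarrow> EN (indicator S) = measure NN S"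
  unfolding EN_def by (subst measure_NN) (auto simp: set_lebesgue_integral_def mult.commute)

lemma goodf_indicator: "S \<in> sets borel \<Longrightarrow> goodf (indicator S)"
proof -
  have e: "(\<lambda>x. std_normal_density x * (indicator S x * indicator S x)) = (\<lambda>x. indicator S x * std_normal_density x)"
    by (auto simp: fun_eq_iff indicator_def)
  have e2: "(\<lambda>x. std_normal_density x * indicator S x) = (\<lambda>x. indicator S x * std_normal_density x)"
    by (auto simp: fun_eq_iff)
  assume "S \<in> sets borel"
  thus ?thesis unfolding goodf_def e e2 using integrable_phi_ind[of S] by auto
qed

locale setting = prob_space M for M :: "'a measure" +
  fixes V W :: "nat \<Rightarrow> 'a \<Rightarrow> real"
  assumes indep: "indep_vars (\<lambda>_. borel) (\<lambda>k. case k of Inl i \<Rightarrow> V i | Inr i \<Rightarrow> W i)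
                  (Inl ` {(1::nat)..} \<union> Inr ` {(1::nat)..})"
    and distV: "\<And>i. i \<ge> 1 \<Longrightarrow> distributed M lborel (V i) std_normal_density"
    and distW: "\<And>i. i \<ge> 1 \<Longrightarrow> distributed M lborel (W i) std_normal_density"
begin

abbreviation "II \<equiv> Inl ` {(1::nat)..} \<union> Inr ` {(1::nat)..}"

lemma measV[measurable]: "i \<ge> 1 \<Longrightarrow> V i \<in> borel_measurable M"
  using indep unfolding indep_vars_def2 by (auto dest!: bspec[of _ _ "Inl i"])

lemma measW[measurable]: "i \<ge> 1 \<Longrightarrow> W i \<in> borel_measurable M"
  using indep unfolding indep_vars_def2 by (auto dest!: bspec[of _ _ "Inr i"])

lemma EV:
  assumes "i \<ge> 1" "\<alpha> \<in> borel_measurable borel" "integrable lborel (\<lambda>x. std_normal_density x * \<alpha> x)"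
  shows "integrable M (\<lambda>\<omega>. \<alpha> (V i \<omega>))" "expectation (\<lambda>\<omega>. \<alpha> (V i \<omega>)) = EN \<alpha>"
proof -
  have d: "distributed M lborel (V i) std_normal_density" using distV assms by auto
  have m: "\<alpha> \<in> borel_measurable lborel" using assms by simp
  show "integrable M (\<lambda>\<omega>. \<alpha> (V i \<omega>))"
    using distributed_integrable[OF d m] assms by simp
  show "expectation (\<lambda>\<omega>. \<alpha> (V i \<omega>)) = EN \<alpha>"
    unfolding EN_def using distributed_integral[OF d m] by simp
qed

lemma EW:
  assumes "i \<ge> 1" "\<alpha> \<in> borel_measurable borel" "integrable lborel (\<lambda>x. std_normal_density x * \<alpha> x)"
  shows "integrable M (\<lambda>\<omega>. \<alpha> (W i \<omega>))" "expectation (\<lambda>\<omega>. \<alpha> (W i \<omega>)) = EN \<alpha>"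
proof -
  have d: "distributed M lborel (W i) std_normal_density" using distW assms by auto
  have m: "\<alpha> \<in> borel_measurable lborel" using assms by simp
  show "integrable M (\<lambda>\<omega>. \<alpha> (W i \<omega>))"
    using distributed_integrable[OF d m] assms by simp
  show "expectation (\<lambda>\<omega>. \<alpha> (W i \<omega>)) = EN \<alpha>"
    unfolding EN_def using distributed_integral[OF d m] by simp
qed

definition FF :: "(real \<Rightarrow> real) \<Rightarrow> (real \<Rightarrow> real) \<Rightarrow> nat + nat \<Rightarrow> 'a \<Rightarrow> real" where
  "FF \<alpha> \<beta> k = (case k of Inl i \<Rightarrow> (\<lambda>\<omega>. \<alpha> (V i \<omega>)) | Inr i \<Rightarrow> (\<lambda>\<omega>. \<beta> (W i \<omega>)))"

lemma indepF:
  assumes "\<alpha> \<in> borel_measurable borel" "\<beta> \<in> borel_measurable borel"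
  shows "indep_vars (\<lambda>_. borel) (FF \<alpha> \<beta>) II"
proof -
  define Y where "Y k = (case k of Inl (i::nat) \<Rightarrow> \<alpha> | Inr (i::nat) \<Rightarrow> \<beta>)" for k
  have "indep_vars (\<lambda>_. borel) (\<lambda>k x. Y k ((\<lambda>k. case k of Inl i \<Rightarrow> V i | Inr i \<Rightarrow> W i) k x)) II"
    by (rule indep_vars_compose2[OF indep]) (auto simp: Y_def assms split: sum.split)
  moreover have "(\<lambda>k x. Y k ((\<lambda>k. case k of Inl i \<Rightarrow> V i | Inr i \<Rightarrow> W i) k x)) = FF \<alpha> \<beta>"
    by (auto simp: fun_eq_iff Y_def FF_def split: sum.split)
  ultimately show ?thesis by simp
qed

lemma prodF:
  assumes "\<alpha> \<in> borel_measurable borel" "\<beta> \<in> borel_measurable borel"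
    and J: "finite J" "J \<subseteq> II" and int: "\<And>k. k \<in> J \<Longrightarrow> integrable M (FF \<alpha> \<beta> k)"
  shows "integrable M (\<lambda>\<omega>. \<Prod>k\<in>J. FF \<alpha> \<beta> k \<omega>)"
    "expectation (\<lambda>\<omega>. \<Prod>k\<in>J. FF \<alpha> \<beta> k \<omega>) = (\<Prod>k\<in>J. expectation (FF \<alpha> \<beta> k))"
proof -
  have ind: "indep_vars (\<lambda>_. borel) (FF \<alpha> \<beta>) J"
    by (rule indep_vars_subset[OF indepF[OF assms(1,2)] J(2)])
  show "integrable M (\<lambda>\<omega>. \<Prod>k\<in>J. FF \<alpha> \<beta> k \<omega>)"
    by (rule indep_vars_integrable[OF J(1) ind int])
  show "expectation (\<lambda>\<omega>. \<Prod>k\<in>J. FF \<alpha> \<beta> k \<omega>) = (\<Prod>k\<in>J. expectation (FF \<alpha> \<beta> k))"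
    by (rule indep_vars_lebesgue_integral[OF J(1) ind int])
qed

lemma intFF:
  assumes "goodf \<alpha>" "goodf \<beta>" "k \<in> II"
  shows "integrable M (FF \<alpha> \<beta> k)" "expectation (FF \<alpha> \<beta> k) = (case k of Inl _ \<Rightarrow> EN \<alpha> | Inr _ \<Rightarrow> EN \<beta>)"
  using assms EV[of _ \<alpha>] EW[of _ \<beta>] unfolding goodf_def FF_def by (auto split: sum.split)

lemma E_single:
  assumes "goodf \<alpha>" "goodf \<beta>" "i \<ge> 1"
  shows "integrable M (\<lambda>\<omega>. \<alpha> (V i \<omega>) * \<beta> (W i \<omega>))"
    "expectation (\<lambda>\<omega>. \<alpha> (V i \<omega>) * \<beta> (W i \<omega>)) = EN \<alpha> * EN \<beta>"
proof -
  have m: "\<alpha> \<in> borel_measurable borel" "\<beta> \<in> borel_measurable borel" using assms unfolding goodf_def by auto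
  have J: "finite {Inl i, Inr i}" "{Inl i, Inr i} \<subseteq> II" using assms by auto
  have eq: "(\<lambda>\<omega>. \<Prod>k\<in>{Inl i, Inr i}. FF \<alpha> \<beta> k \<omega>) = (\<lambda>\<omega>. \<alpha> (V i \<omega>) * \<beta> (W i \<omega>))"
    by (simp add: FF_def)
  have int: "\<And>k. k \<in> {Inl i, Inr i} \<Longrightarrow> integrable M (FF \<alpha> \<beta> k)"
    using intFF[OF assms(1,2)] J by auto
  show "integrable M (\<lambda>\<omega>. \<alpha> (V i \<omega>) * \<beta> (W i \<omega>))"
    using prodF(1)[OF m J int] eq by simp
  have "expectation (\<lambda>\<omega>. \<alpha> (V i \<omega>) * \<beta> (W i \<omega>)) = (\<Prod>k\<in>{Inl i, Inr i}. expectation (FF \<alpha> \<beta> k))"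
    using prodF(2)[OF m J int] eq by simp
  also have "\<dots> = EN \<alpha> * EN \<beta>" using intFF(2)[OF assms(1,2)] J by simp
  finally show "expectation (\<lambda>\<omega>. \<alpha> (V i \<omega>) * \<beta> (W i \<omega>)) = EN \<alpha> * EN \<beta>" .
qed

lemma E_pair:
  assumes "goodf \<alpha>" "goodf \<beta>" "i \<ge> 1" "j \<ge> 1" "i \<noteq> j"
  shows "integrable M (\<lambda>\<omega>. (\<alpha> (V i \<omega>) * \<beta> (W i \<omega>)) * (\<alpha> (V j \<omega>) * \<beta> (W j \<omega>)))"
    "expectation (\<lambda>\<omega>. (\<alpha> (V i \<omega>) * \<beta> (W i \<omega>)) * (\<alpha> (V j \<omega>) * \<beta> (W j \<omega>))) = (EN \<alpha> * EN \<beta>)\<^sup>2"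
proof -
  have m: "\<alpha> \<in> borel_measurable borel" "\<beta> \<in> borel_measurable borel" using assms unfolding goodf_def by auto
  let ?J = "{Inl i, Inr i, Inl j, Inr j}"
  have J: "finite ?J" "?J \<subseteq> II" using assms by auto
  have eq: "(\<lambda>\<omega>. \<Prod>k\<in>?J. FF \<alpha> \<beta> k \<omega>) = (\<lambda>\<omega>. (\<alpha> (V i \<omega>) * \<beta> (W i \<omega>)) * (\<alpha> (V j \<omega>) * \<beta> (W j \<omega>)))"
    using assms by (simp add: FF_def ac_simps)
  have int: "\<And>k. k \<in> ?J \<Longrightarrow> integrable M (FF \<alpha> \<beta> k)"
    using intFF[OF assms(1,2)] J by auto
  show "integrable M (\<lambda>\<omega>. (\<alpha> (V i \<omega>) * \<beta> (W i \<omega>)) * (\<alpha> (V j \<omega>) * \<beta> (W j \<omega>)))"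
    using prodF(1)[OF m J int] eq by simp
  have "expectation (\<lambda>\<omega>. (\<alpha> (V i \<omega>) * \<beta> (W i \<omega>)) * (\<alpha> (V j \<omega>) * \<beta> (W j \<omega>))) = (\<Prod>k\<in>?J. expectation (FF \<alpha> \<beta> k))"
    using prodF(2)[OF m J int] eq by simp
  also have "\<dots> = (EN \<alpha> * EN \<beta>)\<^sup>2" using intFF(2)[OF assms(1,2)] J assms by (simp add: power2_eq_square)
  finally show "expectation (\<lambda>\<omega>. (\<alpha> (V i \<omega>) * \<beta> (W i \<omega>)) * (\<alpha> (V j \<omega>) * \<beta> (W j \<omega>))) = (EN \<alpha> * EN \<beta>)\<^sup>2" .
qed

lemma goodf_sq:
  assumes "goodf \<alpha>"
  shows "\<alpha> \<in> borel_measurable borel" "integrable lborel (\<lambda>x. std_normal_density x * (\<alpha> x * \<alpha> x))"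
  using assms unfolding goodf_def by auto

lemma E_sq:
  assumes "goodf \<alpha>" "goodf \<beta>" "i \<ge> 1"
  shows "integrable M (\<lambda>\<omega>. (\<alpha> (V i \<omega>) * \<beta> (W i \<omega>)) * (\<alpha> (V i \<omega>) * \<beta> (W i \<omega>)))"
    "expectation (\<lambda>\<omega>. (\<alpha> (V i \<omega>) * \<beta> (W i \<omega>)) * (\<alpha> (V i \<omega>) * \<beta> (W i \<omega>)))
       = EN (\<lambda>x. \<alpha> x * \<alpha> x) * EN (\<lambda>x. \<beta> x * \<beta> x)"
proof -
  have e: "(\<lambda>\<omega>. (\<alpha> (V i \<omega>) * \<beta> (W i \<omega>)) * (\<alpha> (V i \<omega>) * \<beta> (W i \<omega>)))
     = (\<lambda>\<omega>. (\<lambda>x. \<alpha> x * \<alpha> x) (V i \<omega>) * (\<lambda>x. \<beta> x * \<beta> x) (W i \<omega>))"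
    by (auto simp: algebra_simps)
  have a: "integrable M (\<lambda>\<omega>. (\<lambda>x. \<alpha> x * \<alpha> x) (V i \<omega>))" "expectation (\<lambda>\<omega>. (\<lambda>x. \<alpha> x * \<alpha> x) (V i \<omega>)) = EN (\<lambda>x. \<alpha> x * \<alpha> x)"
    using EV[OF assms(3), of "\<lambda>x. \<alpha> x * \<alpha> x"] goodf_sq[OF assms(1)] by auto
  have b: "integrable M (\<lambda>\<omega>. (\<lambda>x. \<beta> x * \<beta> x) (W i \<omega>))" "expectation (\<lambda>\<omega>. (\<lambda>x. \<beta> x * \<beta> x) (W i \<omega>)) = EN (\<lambda>x. \<beta> x * \<beta> x)"
    using EW[OF assms(3), of "\<lambda>x. \<beta> x * \<beta> x"] goodf_sq[OF assms(2)] by auto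
  have m: "(\<lambda>x. \<alpha> x * \<alpha> x) \<in> borel_measurable borel" "(\<lambda>x. \<beta> x * \<beta> x) \<in> borel_measurable borel"
    using goodf_sq[OF assms(1)] goodf_sq[OF assms(2)] by auto
  have J: "finite {Inl i, Inr i}" "{Inl i, Inr i} \<subseteq> II" using assms by auto
  have eq: "(\<lambda>\<omega>. \<Prod>k\<in>{Inl i, Inr i}. FF (\<lambda>x. \<alpha> x * \<alpha> x) (\<lambda>x. \<beta> x * \<beta> x) k \<omega>)
      = (\<lambda>\<omega>. (\<lambda>x. \<alpha> x * \<alpha> x) (V i \<omega>) * (\<lambda>x. \<beta> x * \<beta> x) (W i \<omega>))"
    by (simp add: FF_def)
  have int: "\<And>k. k \<in> {Inl i, Inr i} \<Longrightarrow> integrable M (FF (\<lambda>x. \<alpha> x * \<alpha> x) (\<lambda>x. \<beta> x * \<beta> x) k)"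
    using a b by (auto simp: FF_def)
  show "integrable M (\<lambda>\<omega>. (\<alpha> (V i \<omega>) * \<beta> (W i \<omega>)) * (\<alpha> (V i \<omega>) * \<beta> (W i \<omega>)))"
    unfolding e using prodF(1)[OF m J int] eq by simp
  have "expectation (\<lambda>\<omega>. (\<alpha> (V i \<omega>) * \<beta> (W i \<omega>)) * (\<alpha> (V i \<omega>) * \<beta> (W i \<omega>)))
     = (\<Prod>k\<in>{Inl i, Inr i}. expectation (FF (\<lambda>x. \<alpha> x * \<alpha> x) (\<lambda>x. \<beta> x * \<beta> x) k))"
    unfolding e using prodF(2)[OF m J int] eq by simp
  also have "\<dots> = EN (\<lambda>x. \<alpha> x * \<alpha> x) * EN (\<lambda>x. \<beta> x * \<beta> x)"
    using a b by (simp add: FF_def)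
  finally show "expectation (\<lambda>\<omega>. (\<alpha> (V i \<omega>) * \<beta> (W i \<omega>)) * (\<alpha> (V i \<omega>) * \<beta> (W i \<omega>)))
       = EN (\<lambda>x. \<alpha> x * \<alpha> x) * EN (\<lambda>x. \<beta> x * \<beta> x)" .
qed

lemma wlln_prod:
  assumes "goodf \<alpha>" "goodf \<beta>"
  shows "conv_in_prob M (\<lambda>n \<omega>. (\<Sum>i\<in>{1..n}. \<alpha> (V i \<omega>) * \<beta> (W i \<omega>)) / real n) (EN \<alpha> * EN \<beta>)"
proof (rule wlln)
  have m[measurable]: "\<alpha> \<in> borel_measurable borel" "\<beta> \<in> borel_measurable borel"
    using assms unfolding goodf_def by auto
  show "(\<lambda>\<omega>. \<alpha> (V i \<omega>) * \<beta> (W i \<omega>)) \<in> borel_measurable M" if "i \<ge> 1" for i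
    using that by measurable
  show "integrable M (\<lambda>\<omega>. \<alpha> (V i \<omega>) * \<beta> (W i \<omega>))" if "i \<ge> 1" for i
    using E_single[OF assms that] by simp
  show "expectation (\<lambda>\<omega>. \<alpha> (V i \<omega>) * \<beta> (W i \<omega>)) = EN \<alpha> * EN \<beta>" if "i \<ge> 1" for i
    using E_single[OF assms that] by simp
  show "integrable M (\<lambda>\<omega>. \<alpha> (V i \<omega>) * \<beta> (W i \<omega>) * (\<alpha> (V j \<omega>) * \<beta> (W j \<omega>)))"
    if "i \<ge> 1" "j \<ge> 1" for i j
    using E_pair(1)[OF assms that] E_sq(1)[OF assms that(1)] by (cases "i = j") auto
  show "expectation (\<lambda>\<omega>. \<alpha> (V i \<omega>) * \<beta> (W i \<omega>) * (\<alpha> (V j \<omega>) * \<beta> (W j \<omega>))) = (EN \<alpha> * EN \<beta>)\<^sup>2"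
    if "i \<ge> 1" "j \<ge> 1" "i \<noteq> j" for i j
    using E_pair(2)[OF assms that] by simp
  show "expectation (\<lambda>\<omega>. \<alpha> (V i \<omega>) * \<beta> (W i \<omega>) * (\<alpha> (V i \<omega>) * \<beta> (W i \<omega>)))
     = EN (\<lambda>x. \<alpha> x * \<alpha> x) * EN (\<lambda>x. \<beta> x * \<beta> x)" if "i \<ge> 1" for i
    using E_sq(2)[OF assms that] by simp
qed

end


lemma meas_insort:
  fixes f :: "'a \<Rightarrow> nat \<Rightarrow> real"
  assumes "\<And>x y. {\<omega>\<in>space M. f \<omega> x \<le> f \<omega> y} \<in> sets M"
  shows "(\<lambda>\<omega>. insort_key (f \<omega>) x ys) \<in> measurable M (count_space UNIV)"
proof (induction ys)
  case Nil then show ?case by simp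
next
  case (Cons y ys)
  have m2: "(\<lambda>\<omega>. y # insort_key (f \<omega>) x ys) \<in> measurable M (count_space UNIV)"
    using measurable_compose[OF Cons.IH, of "\<lambda>l. y # l" "count_space UNIV"] by simp
  have "(\<lambda>\<omega>. if f \<omega> x \<le> f \<omega> y then x # y # ys else y # insort_key (f \<omega>) x ys) \<in> measurable M (count_space UNIV)"
    by (rule measurable_If[OF _ m2 assms]) simp
  thus ?case by simp
qed

lemma meas_sort:
  fixes f :: "'a \<Rightarrow> nat \<Rightarrow> real"
  assumes "\<And>x y. {\<omega>\<in>space M. f \<omega> x \<le> f \<omega> y} \<in> sets M"
  shows "(\<lambda>\<omega>. sort_key (f \<omega>) xs) \<in> measurable M (count_space UNIV)"
proof (induction xs)
  case Nil then show ?case by simp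
next
  case (Cons x xs)
  have h: "\<And>L. (\<lambda>\<omega>. insort_key (f \<omega>) x L) \<in> measurable M (count_space UNIV)"
    by (rule meas_insort) (rule assms)
  have "(\<lambda>\<omega>. (\<lambda>L \<omega>. insort_key (f \<omega>) x L) (sort_key (f \<omega>) xs) \<omega>) \<in> measurable M (count_space UNIV)"
    by (rule measurable_compose_countable[OF h Cons.IH])
  thus ?case by simp
qed

lemma trim_decomp:
  fixes v :: "nat \<Rightarrow> real" and h :: "nat \<Rightarrow> real" and c :: real
  assumes PR: "P \<le> R" "R \<le> n" and ab: "a < b" and c: "c > 0"
  defines "\<pi> \<equiv> sort_key v [1..<n+1]"
    and "La \<equiv> card {k\<in>{1..n}. Phi (v k) \<le> a}" and "Lb \<equiv> card {k\<in>{1..n}. Phi (v k) < b}"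
  shows "\<bar>(\<Sum>j\<in>{P..<R}. h (\<pi> ! j)) - (\<Sum>k\<in>{1..n}. h k * indicator (A_V a b) (v k))\<bar>
     \<le> c * (\<bar>real P - real La\<bar> + \<bar>real R - real Lb\<bar>) + 2 * (\<Sum>k\<in>{1..n}. (h k)\<^sup>2) / c"
proof -
  define SLa where "SLa = {k\<in>{1..n}. Phi (v k) \<le> a}"
  define SLb where "SLb = {k\<in>{1..n}. Phi (v k) < b}"
  have d: "distinct \<pi>" and st: "set \<pi> = {1..n}" and len: "length \<pi> = n" and so: "sorted (map v \<pi>)"
    unfolding \<pi>_def by auto
  have dcb: "\<forall>s\<in>SLb. \<forall>t\<in>set \<pi> - SLb. v s < v t"
  proof (intro ballI)
    fix s t assume s: "s \<in> SLb" and t: "t \<in> set \<pi> - SLb"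
    show "v s < v t"
    proof (rule ccontr)
      assume "\<not> v s < v t"
      hence "Phi (v t) \<le> Phi (v s)" by (intro Phi_mono) simp
      thus False using s t st unfolding SLb_def by auto
    qed
  qed
  have dca: "\<forall>s\<in>SLa. \<forall>t\<in>set \<pi> - SLa. v s < v t"
  proof (intro ballI)
    fix s t assume s: "s \<in> SLa" and t: "t \<in> set \<pi> - SLa"
    show "v s < v t"
    proof (rule ccontr)
      assume "\<not> v s < v t"
      hence "Phi (v t) \<le> Phi (v s)" by (intro Phi_mono) simp
      thus False using s t st unfolding SLa_def by auto
    qed
  qed
  have subb: "SLb \<subseteq> set \<pi>" and suba: "SLa \<subseteq> set \<pi>" using st unfolding SLa_def SLb_def by auto
  have ab_sub: "SLa \<subseteq> SLb" using ab unfolding SLa_def SLb_def by auto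
  have LaLb: "La \<le> Lb" unfolding La_def Lb_def using card_mono[OF _ ab_sub] unfolding SLa_def SLb_def by simp
  have "card SLb \<le> card {1..n}" by (rule card_mono) (auto simp: SLb_def)
  hence Lbn: "Lb \<le> n" unfolding Lb_def SLb_def by simp
  have sb: "(\<Sum>j<Lb. h (\<pi> ! j)) = sum h SLb"
    using sum_prefix[OF d so subb dcb] unfolding Lb_def SLb_def by simp
  have sa: "(\<Sum>j<La. h (\<pi> ! j)) = sum h SLa"
    using sum_prefix[OF d so suba dca] unfolding La_def SLa_def by simp
  have U: "(\<Sum>j\<in>{La..<Lb}. h (\<pi> ! j)) = (\<Sum>k\<in>{1..n}. h k * indicator (A_V a b) (v k))"
  proof -
    have "(\<Sum>j\<in>{La..<Lb}. h (\<pi> ! j)) = (\<Sum>j<Lb. h (\<pi> ! j)) - (\<Sum>j<La. h (\<pi> ! j))"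
      using sum_diff_nat_ivl[of 0 La Lb "\<lambda>j. h (\<pi> ! j)"] LaLb by (simp add: atLeast0LessThan)
    also have "\<dots> = sum h SLb - sum h SLa" using sa sb by simp
    also have "\<dots> = sum h (SLb - SLa)"
      using ab_sub by (subst sum_diff) (auto simp: SLb_def)
    also have "SLb - SLa = {1..n} \<inter> {k. v k \<in> A_V a b}"
      unfolding SLa_def SLb_def A_V_def by auto
    also have "sum h \<dots> = (\<Sum>k\<in>{1..n}. if k \<in> {k. v k \<in> A_V a b} then h k else 0)"
      by (rule sum.inter_restrict) simp
    also have "\<dots> = (\<Sum>k\<in>{1..n}. h k * indicator (A_V a b) (v k))"
      by (rule sum.cong[OF refl]) (simp add: indicator_def)
    finally show ?thesis .
  qed
  let ?h = "\<lambda>j. h (\<pi> ! j)"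
  have "\<bar>(\<Sum>j\<in>{P..<R}. ?h j) - (\<Sum>j\<in>{La..<Lb}. ?h j)\<bar>
     \<le> (\<Sum>j\<in>{min P La..<max P La}. \<bar>?h j\<bar>) + (\<Sum>j\<in>{min R Lb..<max R Lb}. \<bar>?h j\<bar>)"
    by (rule interval_sum_diff[OF PR(1) LaLb])
  also have "\<dots> \<le> (c * card {min P La..<max P La} + (\<Sum>j<n. (?h j)\<^sup>2) / c)
                 + (c * card {min R Lb..<max R Lb} + (\<Sum>j<n. (?h j)\<^sup>2) / c)"
  proof (intro add_mono sum_abs_amgm c)
    show "{min P La..<max P La} \<subseteq> {..<n}" using PR LaLb Lbn by auto
    show "{min R Lb..<max R Lb} \<subseteq> {..<n}" using PR Lbn by auto
  qed
  also have "card {min P La..<max P La} = \<bar>real P - real La\<bar>" by (simp add: max_def min_def)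
  also have "card {min R Lb..<max R Lb} = \<bar>real R - real Lb\<bar>" by (simp add: max_def min_def)
  also have "(\<Sum>j<n. (?h j)\<^sup>2) = (\<Sum>k\<in>{1..n}. (h k)\<^sup>2)"
    using sum_nth_distinct[OF d, of n "\<lambda>k. (h k)\<^sup>2"] len st by simp
  finally show ?thesis unfolding U by (simp add: algebra_simps add_divide_distrib)
qed


lemma floor_lim:
  assumes "0 \<le> a"
  shows "(\<lambda>n. real (nat \<lfloor>real n * a\<rfloor>) / real n) \<longlonglongrightarrow> a"
proof (rule tendsto_sandwich[of "\<lambda>n. a - 1 / real n" _ _ "\<lambda>n. a"])
  have e: "real (nat \<lfloor>real n * a\<rfloor>) = of_int \<lfloor>real n * a\<rfloor>" for n using assms by simp
  show "eventually (\<lambda>n. a - 1 / real n \<le> real (nat \<lfloor>real n * a\<rfloor>) / real n) sequentially"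
  proof (rule eventually_sequentiallyI[of 1])
    fix n :: nat assume n: "n \<ge> 1"
    have "real n * a - 1 \<le> of_int \<lfloor>real n * a\<rfloor>" by linarith
    hence "(real n * a - 1) / real n \<le> real (nat \<lfloor>real n * a\<rfloor>) / real n"
      unfolding e using n by (intro divide_right_mono) auto
    moreover have "(real n * a - 1) / real n = a - 1 / real n" using n by (simp add: field_simps)
    ultimately show "a - 1 / real n \<le> real (nat \<lfloor>real n * a\<rfloor>) / real n" by simp
  qed
  show "eventually (\<lambda>n. real (nat \<lfloor>real n * a\<rfloor>) / real n \<le> a) sequentially"
  proof (rule eventually_sequentiallyI[of 1])
    fix n :: nat assume n: "n \<ge> 1"
    have "of_int \<lfloor>real n * a\<rfloor> \<le> real n * a" by linarith
    hence "real (nat \<lfloor>real n * a\<rfloor>) / real n \<le> real n * a / real n"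
      unfolding e using n by (intro divide_right_mono) auto
    thus "real (nat \<lfloor>real n * a\<rfloor>) / real n \<le> a" using n by simp
  qed
  show "(\<lambda>n. a - 1 / real n) \<longlonglongrightarrow> a"
    using tendsto_diff[OF tendsto_const[of a] lim_const_over_n[of 1]] by simp
qed simp

context prob_space begin

lemma cip_abs0:
  assumes "conv_in_prob M X 0"
  shows "conv_in_prob M (\<lambda>n \<omega>. \<bar>X n \<omega>\<bar>) 0"
  using assms unfolding conv_in_prob_def by (auto intro: borel_measurable_abs)

end

locale setting2 = setting +
  fixes a b :: real
  assumes ab: "0 \<le> a" "a < b" "b \<le> 1"
begin

abbreviation "Pn n \<equiv> nat \<lfloor>real n * a\<rfloor>"
abbreviation "Rn n \<equiv> nat \<lfloor>real n * b\<rfloor>"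

lemma PR: "Pn n \<le> Rn n" "Rn n \<le> n"
proof -
  have "real n * a \<le> real n * b" using ab by (intro mult_left_mono) auto
  thus "Pn n \<le> Rn n" by (intro nat_mono floor_mono)
  have "real n * b \<le> real n" using ab by (simp add: mult_left_le)
  hence "\<lfloor>real n * b\<rfloor> \<le> int n" by linarith
  thus "Rn n \<le> n" by linarith
qed

lemma m_eq: "real (m_n a b n) = real (Rn n) - real (Pn n)"
  unfolding m_n_def using PR[of n] by simp

lemma m_lim: "(\<lambda>n. real (m_n a b n) / real n) \<longlonglongrightarrow> b - a"
proof -
  have "(\<lambda>n. real (Rn n) / real n - real (Pn n) / real n) \<longlonglongrightarrow> b - a"
    using ab by (intro tendsto_diff floor_lim) auto
  thus ?thesis unfolding m_eq by (simp add: diff_divide_distrib)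
qed

definition Vt :: "nat \<Rightarrow> 'a \<Rightarrow> real" where "Vt i \<omega> = (if i = 0 then 0 else V i \<omega>)"
definition Wt :: "nat \<Rightarrow> 'a \<Rightarrow> real" where "Wt i \<omega> = (if i = 0 then 0 else W i \<omega>)"

lemma measVt[measurable]: "Vt i \<in> borel_measurable M"
  unfolding Vt_def by (cases "i = 0") auto
lemma measWt[measurable]: "Wt i \<in> borel_measurable M"
  unfolding Wt_def by (cases "i = 0") auto

lemma ord_eq: "ord_idx (\<lambda>i. V i \<omega>) n = sort_key (\<lambda>i. Vt i \<omega>) [1..<n+1]"
  unfolding ord_idx_def by (rule sort_key_cong) (auto simp: Vt_def)

lemma ord_mem: "j < n \<Longrightarrow> ord_idx (\<lambda>i. V i \<omega>) n ! j \<in> {1..n}"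
proof -
  assume j: "j < n"
  have "ord_idx (\<lambda>i. V i \<omega>) n ! j \<in> set (ord_idx (\<lambda>i. V i \<omega>) n)"
    using j by (intro nth_mem) (simp add: ord_idx_def)
  thus ?thesis by (simp add: ord_idx_def del: upt_Suc)
qed

lemma meas_ord: "(\<lambda>\<omega>. sort_key (\<lambda>i. Vt i \<omega>) xs) \<in> measurable M (count_space UNIV)"
  by (rule meas_sort) measurable

lemma meas_T:
  fixes G H :: "real \<Rightarrow> real"
  assumes [measurable]: "G \<in> borel_measurable borel" "H \<in> borel_measurable borel"
  shows "(\<lambda>\<omega>. \<Sum>j\<in>{Pn n..<Rn n}. G (V (ord_idx (\<lambda>i. V i \<omega>) n ! j) \<omega>) * H (W (ord_idx (\<lambda>i. V i \<omega>) n ! j) \<omega>))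
         \<in> borel_measurable M"
proof -
  define f where "f L \<omega> = (\<Sum>j\<in>{Pn n..<Rn n}. G (Vt (L ! j) \<omega>) * H (Wt (L ! j) \<omega>))" for L :: "nat list" and \<omega>
  have "(\<lambda>\<omega>. f (sort_key (\<lambda>i. Vt i \<omega>) [1..<n+1]) \<omega>) \<in> borel_measurable M"
  proof (rule measurable_compose_countable[OF _ meas_ord])
    fix L show "(\<lambda>\<omega>. f L \<omega>) \<in> borel_measurable M" unfolding f_def
      by (intro borel_measurable_sum) measurable
  qed
  moreover have "f (sort_key (\<lambda>i. Vt i \<omega>) [1..<n+1]) \<omega>
     = (\<Sum>j\<in>{Pn n..<Rn n}. G (V (ord_idx (\<lambda>i. V i \<omega>) n ! j) \<omega>) * H (W (ord_idx (\<lambda>i. V i \<omega>) n ! j) \<omega>))" for \<omega>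
    unfolding f_def ord_eq[symmetric]
  proof (rule sum.cong[OF refl])
    fix j assume "j \<in> {Pn n..<Rn n}"
    hence "j < n" using PR[of n] by auto
    hence "ord_idx (\<lambda>i. V i \<omega>) n ! j \<in> {1..n}" by (rule ord_mem)
    thus "G (Vt (ord_idx (\<lambda>i. V i \<omega>) n ! j) \<omega>) * H (Wt (ord_idx (\<lambda>i. V i \<omega>) n ! j) \<omega>)
        = G (V (ord_idx (\<lambda>i. V i \<omega>) n ! j) \<omega>) * H (W (ord_idx (\<lambda>i. V i \<omega>) n ! j) \<omega>)"
      by (simp add: Vt_def Wt_def)
  qed
  ultimately show ?thesis by simp
qed

end


lemma alg_helper: fixes X Y S n c :: real assumes "n > 0" "c > 0"
  shows "(c * (X + Y) + 2 * S / c) / n = c * (X / n + Y / n) + 2 * S / n / c"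
  using assms by (simp add: field_simps)

context setting2 begin

lemma card_sum: fixes n :: nat shows "real (card {k\<in>{1..n}. P k}) = (\<Sum>k\<in>{1..n}. of_bool (P k))"
proof -
  have "real (card {k\<in>{1..n}. P k}) = (\<Sum>k\<in>{k\<in>{1..n}. P k}. 1)" by simp
  also have "\<dots> = (\<Sum>k\<in>{1..n}. if P k then 1 else 0)" by (rule sum.inter_filter) simp
  also have "\<dots> = (\<Sum>k\<in>{1..n}. of_bool (P k))" by (intro sum.cong) auto
  finally show ?thesis .
qed

lemma EN_one: "EN (\<lambda>_. 1) = 1" unfolding EN_def by simp

lemma goodf_one: "goodf (\<lambda>_. 1)" unfolding goodf_def by simp

lemma count_lim:
  assumes S: "S \<in> sets borel"
  shows "conv_in_prob M (\<lambda>n \<omega>. real (card {k\<in>{1..n}. V k \<omega> \<in> S}) / real n) (measure NN S)"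
proof -
  have "conv_in_prob M (\<lambda>n \<omega>. (\<Sum>i\<in>{1..n}. indicator S (V i \<omega>) * (\<lambda>_. 1::real) (W i \<omega>)) / real n)
          (EN (indicator S) * EN (\<lambda>_. 1))"
    by (rule wlln_prod[OF goodf_indicator[OF S] goodf_one])
  moreover have "(\<Sum>i\<in>{1..n}. indicator S (V i \<omega>) * (\<lambda>_. 1::real) (W i \<omega>)) = real (card {k\<in>{1..n}. V k \<omega> \<in> S})" for n \<omega>
    by (subst card_sum) (simp add: indicator_def)
  ultimately show ?thesis using EN_indicator[OF S] EN_one by simp
qed

lemma trimmed_conv:
  fixes G H :: "real \<Rightarrow> real"
  assumes gG: "goodf G" and gH: "goodf H" and gA: "goodf (\<lambda>v. indicator (A_V a b) v * G v)"
  shows "conv_in_prob M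
     (\<lambda>n \<omega>. (\<Sum>j\<in>{Pn n..<Rn n}. G (V (ord_idx (\<lambda>i. V i \<omega>) n ! j) \<omega>) * H (W (ord_idx (\<lambda>i. V i \<omega>) n ! j) \<omega>))
            / real (m_n a b n))
     (EN (\<lambda>v. indicator (A_V a b) v * G v) * EN H / (b - a))"
proof -
  have mG[measurable]: "G \<in> borel_measurable borel" and mH[measurable]: "H \<in> borel_measurable borel"
    using gG gH unfolding goodf_def by auto
  define \<mu> where "\<mu> = EN (\<lambda>v. indicator (A_V a b) v * G v) * EN H"
  define hh where "hh \<omega> k = G (V k \<omega>) * H (W k \<omega>)" for \<omega> k
  define T where "T n \<omega> = (\<Sum>j\<in>{Pn n..<Rn n}. hh \<omega> (ord_idx (\<lambda>i. V i \<omega>) n ! j))" for n \<omega>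
  define U where "U n \<omega> = (\<Sum>k\<in>{1..n}. hh \<omega> k * indicator (A_V a b) (V k \<omega>))" for n \<omega>
  define La where "La n \<omega> = card {k\<in>{1..n}. Phi (V k \<omega>) \<le> a}" for n \<omega>
  define Lb where "Lb n \<omega> = card {k\<in>{1..n}. Phi (V k \<omega>) < b}" for n \<omega>
  define D where "D n \<omega> = \<bar>real (Pn n) / real n - real (La n \<omega>) / real n\<bar> + \<bar>real (Rn n) / real n - real (Lb n \<omega>) / real n\<bar>" for n \<omega>
  define Q where "Q n \<omega> = 2 * (\<Sum>k\<in>{1..n}. (hh \<omega> k)\<^sup>2) / real n" for n \<omega>
  define s where "s = 2 * (EN (\<lambda>x. G x * G x) * EN (\<lambda>x. H x * H x))"
  have mT: "T n \<in> borel_measurable M" for n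
    unfolding T_def hh_def using meas_T[OF mG mH, of n] by simp
  have mU: "U n \<in> borel_measurable M" for n
    unfolding U_def hh_def by (intro borel_measurable_sum) measurable
  have mQ: "Q n \<in> borel_measurable M" for n
    unfolding Q_def hh_def by (intro borel_measurable_divide borel_measurable_times borel_measurable_sum) measurable
  have cU: "conv_in_prob M (\<lambda>n \<omega>. U n \<omega> / real n) \<mu>"
  proof -
    have "conv_in_prob M (\<lambda>n \<omega>. (\<Sum>i\<in>{1..n}. (\<lambda>v. indicator (A_V a b) v * G v) (V i \<omega>) * H (W i \<omega>)) / real n) \<mu>"
      unfolding \<mu>_def by (rule wlln_prod[OF gA gH])
    moreover have "(\<Sum>i\<in>{1..n}. (\<lambda>v. indicator (A_V a b) v * G v) (V i \<omega>) * H (W i \<omega>)) = U n \<omega>" for n \<omega>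
      unfolding U_def hh_def by (intro sum.cong refl) (simp add: algebra_simps)
    ultimately show ?thesis by simp
  qed
  have cD: "conv_in_prob M D 0"
  proof -
    have ca: "conv_in_prob M (\<lambda>n \<omega>. real (Pn n) / real n - real (La n \<omega>) / real n) (a - a)"
    proof (rule cip_diff)
      show "conv_in_prob M (\<lambda>n \<omega>. real (Pn n) / real n) a" using floor_lim[OF ab(1)] by (rule cip_const)
      show "conv_in_prob M (\<lambda>n \<omega>. real (La n \<omega>) / real n) a"
        unfolding La_def using count_lim[of "{x. Phi x \<le> a}"] measure_NN_le[of a] ab by (simp add: A_V_def)
    qed
    have cb: "conv_in_prob M (\<lambda>n \<omega>. real (Rn n) / real n - real (Lb n \<omega>) / real n) (b - b)"
    proof (rule cip_diff)
      show "conv_in_prob M (\<lambda>n \<omega>. real (Rn n) / real n) b" using floor_lim ab by (intro cip_const) auto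
      show "conv_in_prob M (\<lambda>n \<omega>. real (Lb n \<omega>) / real n) b"
        unfolding Lb_def using count_lim[of "{x. Phi x < b}"] measure_NN_lt[of b] ab by (simp add: A_V_def)
    qed
    have "conv_in_prob M (\<lambda>n \<omega>. \<bar>real (Pn n) / real n - real (La n \<omega>) / real n\<bar>
         + \<bar>real (Rn n) / real n - real (Lb n \<omega>) / real n\<bar>) (0 + 0)"
      using ca cb by (intro cip_add cip_abs0) auto
    thus ?thesis unfolding D_def[abs_def] by simp
  qed
  have cE: "conv_in_prob M (\<lambda>n \<omega>. (T n \<omega> - U n \<omega>) / real n) 0"
  proof (rule cip_dom[OF _ cD mQ])
    show "(\<lambda>\<omega>. (T n \<omega> - U n \<omega>) / real n) \<in> borel_measurable M" for n
      using mT mU by measurable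
    show intQ: "integrable M (Q n)" for n
    proof -
      have "integrable M (\<lambda>\<omega>. (\<Sum>k\<in>{1..n}. (hh \<omega> k)\<^sup>2))"
      proof (intro Bochner_Integration.integrable_sum)
        fix k assume "k \<in> {1..n}"
        hence "integrable M (\<lambda>\<omega>. (G (V k \<omega>) * H (W k \<omega>)) * (G (V k \<omega>) * H (W k \<omega>)))"
          using E_sq(1)[OF gG gH] by auto
        thus "integrable M (\<lambda>\<omega>. (hh \<omega> k)\<^sup>2)" unfolding hh_def power2_eq_square .
      qed
      thus ?thesis unfolding Q_def[abs_def] by (intro integrable_divide integrable_mult_right)
    qed
    show "\<And>n \<omega>. \<omega> \<in> space M \<Longrightarrow> 0 \<le> Q n \<omega>" unfolding Q_def by (auto intro!: divide_nonneg_nonneg sum_nonneg)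
    show "expectation (Q n) \<le> s" for n
    proof (cases "n = 0")
      case True
      have "0 \<le> EN (\<lambda>x. G x * G x)" "0 \<le> EN (\<lambda>x. H x * H x)"
        unfolding EN_def by (auto intro!: Bochner_Integration.integral_nonneg)
      thus ?thesis using True unfolding Q_def s_def by simp
    next
      case False
      have "expectation (Q n) = 2 * (\<Sum>k\<in>{1..n}. expectation (\<lambda>\<omega>. (hh \<omega> k)\<^sup>2)) / real n"
      proof -
        have "expectation (\<lambda>\<omega>. (\<Sum>k\<in>{1..n}. (hh \<omega> k)\<^sup>2)) = (\<Sum>k\<in>{1..n}. expectation (\<lambda>\<omega>. (hh \<omega> k)\<^sup>2))"
        proof (rule Bochner_Integration.integral_sum)
          fix k assume "k \<in> {1..n}"
          hence "integrable M (\<lambda>\<omega>. (G (V k \<omega>) * H (W k \<omega>)) * (G (V k \<omega>) * H (W k \<omega>)))"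
            using E_sq(1)[OF gG gH] by auto
          thus "integrable M (\<lambda>\<omega>. (hh \<omega> k)\<^sup>2)" unfolding hh_def power2_eq_square .
        qed
        thus ?thesis unfolding Q_def[abs_def] by simp
      qed
      also have "(\<Sum>k\<in>{1..n}. expectation (\<lambda>\<omega>. (hh \<omega> k)\<^sup>2)) = (\<Sum>k\<in>{1..n}. EN (\<lambda>x. G x * G x) * EN (\<lambda>x. H x * H x))"
      proof (rule sum.cong[OF refl])
        fix k assume "k \<in> {1..n}"
        thus "expectation (\<lambda>\<omega>. (hh \<omega> k)\<^sup>2) = EN (\<lambda>x. G x * G x) * EN (\<lambda>x. H x * H x)"
          using E_sq(2)[OF gG gH, of k] unfolding hh_def power2_eq_square by auto
      qed
      finally show ?thesis using False unfolding s_def by simp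
    qed
    show "\<bar>(T n \<omega> - U n \<omega>) / real n - 0\<bar> \<le> c * D n \<omega> + Q n \<omega> / c"
      if c: "c > 0" and w: "\<omega> \<in> space M" for c n \<omega>
    proof (cases "n = 0")
      case True
      thus ?thesis unfolding D_def Q_def by simp
    next
      case False
      hence np: "real n > 0" by simp
      have td: "\<bar>T n \<omega> - U n \<omega>\<bar> \<le> c * (\<bar>real (Pn n) - real (La n \<omega>)\<bar> + \<bar>real (Rn n) - real (Lb n \<omega>)\<bar>)
                 + 2 * (\<Sum>k\<in>{1..n}. (hh \<omega> k)\<^sup>2) / c"
        using trim_decomp[OF PR ab(2) c, where v="\<lambda>i. V i \<omega>" and h="hh \<omega>"]
        unfolding T_def U_def La_def Lb_def ord_idx_def by (simp only:)
      have "\<bar>(T n \<omega> - U n \<omega>) / real n - 0\<bar> = \<bar>T n \<omega> - U n \<omega>\<bar> / real n" using np by simp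
      also have "\<dots> \<le> (c * (\<bar>real (Pn n) - real (La n \<omega>)\<bar> + \<bar>real (Rn n) - real (Lb n \<omega>)\<bar>)
                 + 2 * (\<Sum>k\<in>{1..n}. (hh \<omega> k)\<^sup>2) / c) / real n"
        using td np by (intro divide_right_mono) auto
      also have "\<dots> = c * D n \<omega> + Q n \<omega> / c"
      proof -
        have e1: "\<bar>real (Pn n) / real n - real (La n \<omega>) / real n\<bar> = \<bar>real (Pn n) - real (La n \<omega>)\<bar> / real n"
          using np by (simp only: diff_divide_distrib[symmetric] abs_div_pos)
        have e2: "\<bar>real (Rn n) / real n - real (Lb n \<omega>) / real n\<bar> = \<bar>real (Rn n) - real (Lb n \<omega>)\<bar> / real n"
          using np by (simp only: diff_divide_distrib[symmetric] abs_div_pos)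
        show ?thesis unfolding D_def Q_def e1 e2 by (rule alg_helper[OF np c])
      qed
      finally show ?thesis .
    qed
  qed
  have cTn: "conv_in_prob M (\<lambda>n \<omega>. T n \<omega> / real n) \<mu>"
  proof -
    have "conv_in_prob M (\<lambda>n \<omega>. (T n \<omega> - U n \<omega>) / real n + U n \<omega> / real n) (0 + \<mu>)"
      by (rule cip_add[OF cE cU])
    moreover have "(T n \<omega> - U n \<omega>) / real n + U n \<omega> / real n = T n \<omega> / real n" for n \<omega>
      by (simp add: diff_divide_distrib)
    ultimately show ?thesis by simp
  qed
  have cinv: "conv_in_prob M (\<lambda>n \<omega>. real n / real (m_n a b n)) (inverse (b - a))"
  proof -
    have "(\<lambda>n. inverse (real (m_n a b n) / real n)) \<longlonglongrightarrow> inverse (b - a)"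
      using ab by (intro tendsto_inverse m_lim) auto
    hence "(\<lambda>n. real n / real (m_n a b n)) \<longlonglongrightarrow> inverse (b - a)" by simp
    thus ?thesis by (rule cip_const)
  qed
  have cc: "conv_in_prob M (\<lambda>n \<omega>. T n \<omega> / real n * (real n / real (m_n a b n))) (\<mu> * inverse (b - a))"
    by (rule cip_mult[OF cTn cinv])
  have eqp: "T n \<omega> / real n * (real n / real (m_n a b n)) = T n \<omega> / real (m_n a b n)" for n \<omega>
  proof (cases "n = 0")
    case True
    thus ?thesis unfolding T_def by simp
  next
    case False thus ?thesis by simp
  qed
  have eqf: "(\<lambda>n \<omega>. T n \<omega> / real n * (real n / real (m_n a b n))) = (\<lambda>n \<omega>. T n \<omega> / real (m_n a b n))"
    using eqp by (intro ext) simp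
  from cc have "conv_in_prob M (\<lambda>n \<omega>. T n \<omega> / real (m_n a b n)) (\<mu> * inverse (b - a))"
    by (simp only: eqf)
  then show ?thesis unfolding \<mu>_def T_def hh_def by (simp only: divide_inverse)
qed

end


lemma goodf_pow: "goodf (\<lambda>v. v ^ p)"
proof -
  have "(\<lambda>x. std_normal_density x * (x ^ p * x ^ p)) = (\<lambda>x. std_normal_density x * x ^ (p + p))"
    by (simp add: power_add)
  thus ?thesis unfolding goodf_def using integrable_std_normal_moment[of p] integrable_std_normal_moment[of "p+p"]
    by simp
qed

lemma goodf_ind_pow: assumes A: "A \<in> sets borel" shows "goodf (\<lambda>v. indicator A v * v ^ p)"
proof -
  have e1: "(\<lambda>x. std_normal_density x * (indicator A x * x ^ p)) = (\<lambda>x. (std_normal_density x * x ^ p) * indicator A x)"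
    by (simp add: mult_ac)
  have e2: "(\<lambda>x. std_normal_density x * ((indicator A x * x ^ p) * (indicator A x * x ^ p)))
          = (\<lambda>x. (std_normal_density x * x ^ (p + p)) * indicator A x)"
    by (auto simp: fun_eq_iff indicator_def power_add)
  show ?thesis unfolding goodf_def e1 e2 using A
    by (auto intro!: integrable_real_mult_indicator integrable_std_normal_moment)
qed

lemma EN_w0: "EN (\<lambda>w. w ^ 0) = 1" unfolding EN_def by simp
lemma EN_w1: "EN (\<lambda>w. w ^ 1) = 0"
  unfolding EN_def using integral_std_normal_moment_odd[of 0] by simp
lemma EN_w2: "EN (\<lambda>w. w ^ 2) = 1"
  unfolding EN_def using integral_std_normal_moment_even[of 1] by simp

lemma den_A: assumes "0 \<le> a" "a < b" "b \<le> 1"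
  shows "(LBINT x:A_V a b. std_normal_density x) = b - a"
  using measure_NN[of "A_V a b"] measure_NN_A_V[OF assms] by simp

lemma EN_ind_pow: assumes ab: "0 \<le> a" "a < b" "b \<le> 1"
  shows "EN (\<lambda>v. indicator (A_V a b) v * v ^ p) = lam p a b * (b - a)"
proof -
  have "EN (\<lambda>v. indicator (A_V a b) v * v ^ p) = (LBINT x:A_V a b. x ^ p * std_normal_density x)"
    unfolding EN_def set_lebesgue_integral_def by (intro Bochner_Integration.integral_cong) auto
  moreover have "b - a \<noteq> 0" using ab by simp
  ultimately show ?thesis unfolding lam_def den_A[OF ab] by simp
qed

lemma lam0: assumes "0 \<le> a" "a < b" "b \<le> 1" shows "lam 0 a b = 1"
  unfolding lam_def using den_A[OF assms] assms by simp

lemma reidx: "(\<Sum>i\<in>{Suc p..r}. f (i - 1)) = (\<Sum>j\<in>{p..<r}. f j)"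
  by (rule sum.reindex_bij_witness[of _ Suc "\<lambda>i. i - 1"]) auto

lemma card_trim: "card (trim_idx a b n) = m_n a b n"
  unfolding trim_idx_def m_n_def by simp

lemma lin3: fixes f g :: "nat \<Rightarrow> real"
  shows "(\<Sum>j\<in>J. \<alpha> + \<beta> * f j + \<gamma> * g j) / m
     = \<alpha> * ((\<Sum>j\<in>J. 1) / m) + \<beta> * ((\<Sum>j\<in>J. f j) / m) + \<gamma> * ((\<Sum>j\<in>J. g j) / m)"
  by (simp add: sum.distrib sum_distrib_left[symmetric] add_divide_distrib)

lemma cov_id: fixes x y :: "nat \<Rightarrow> real"
  assumes "finite J" "card J = m"
  shows "(\<Sum>j\<in>J. (x j - (\<Sum>i\<in>J. x i) / m) * (y j - (\<Sum>i\<in>J. y i) / m)) / m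
       = (\<Sum>j\<in>J. x j * y j) / m - ((\<Sum>i\<in>J. x i) / m) * ((\<Sum>i\<in>J. y i) / m)"
proof (cases "m = 0")
  case True thus ?thesis by simp
next
  case False
  define X where "X = (\<Sum>i\<in>J. x i) / m"
  define Y where "Y = (\<Sum>i\<in>J. y i) / m"
  have sx: "(\<Sum>i\<in>J. x i) = m * X" and sy: "(\<Sum>i\<in>J. y i) = m * Y"
    unfolding X_def Y_def using False by auto
  have "(\<Sum>j\<in>J. (x j - X) * (y j - Y)) = (\<Sum>j\<in>J. x j * y j - Y * x j - X * y j + X * Y)"
    by (intro sum.cong) (auto simp: algebra_simps)
  also have "\<dots> = (\<Sum>j\<in>J. x j * y j) - Y * (\<Sum>j\<in>J. x j) - X * (\<Sum>j\<in>J. y j) + m * X * Y"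
    using assms by (simp add: sum.distrib sum_subtractf sum_distrib_left)
  also have "\<dots> = (\<Sum>j\<in>J. x j * y j) - m * X * Y" unfolding sx sy by (simp add: algebra_simps)
  finally have "(\<Sum>j\<in>J. (x j - X) * (y j - Y)) = (\<Sum>j\<in>J. x j * y j) - m * X * Y" .
  hence "(\<Sum>j\<in>J. (x j - X) * (y j - Y)) / m = (\<Sum>j\<in>J. x j * y j) / m - X * Y"
    using False by (simp add: diff_divide_distrib)
  thus ?thesis unfolding X_def Y_def .
qed

lemma cip_eqc: "conv_in_prob M X c \<Longrightarrow> c = d \<Longrightarrow> conv_in_prob M X d" by simp


lemma lin6: fixes f g :: "nat \<Rightarrow> real"
  shows "(\<Sum>j\<in>J. (m1 + A * f j + B * g j) * (m2 + C * f j + D * g j)) / m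
   = m1 * m2 * ((\<Sum>j\<in>J. 1) / m) + (m1 * C + A * m2) * ((\<Sum>j\<in>J. f j) / m)
     + (m1 * D + B * m2) * ((\<Sum>j\<in>J. g j) / m) + (A * C) * ((\<Sum>j\<in>J. f j ^ 2) / m)
     + (A * D + B * C) * ((\<Sum>j\<in>J. f j * g j) / m) + (B * D) * ((\<Sum>j\<in>J. g j ^ 2) / m)"
proof -
  have "(\<Sum>j\<in>J. (m1 + A * f j + B * g j) * (m2 + C * f j + D * g j))
     = (\<Sum>j\<in>J. m1 * m2 * 1 + (m1 * C + A * m2) * f j + (m1 * D + B * m2) * g j + (A * C) * f j ^ 2
          + (A * D + B * C) * (f j * g j) + (B * D) * g j ^ 2)"
    by (intro sum.cong refl) (simp add: algebra_simps power2_eq_square)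
  thus ?thesis by (simp add: sum.distrib sum_distrib_left[symmetric] add_divide_distrib)
qed

theorem corollaryA4:
  fixes M :: "'a measure" and V W :: "nat \<Rightarrow> 'a \<Rightarrow> real"
    and a b mu1 mu2 sigma1 sigma2 gamma1 gamma2 :: real
  assumes "prob_space M"
    and indep: "prob_space.indep_vars M (\<lambda>_. borel) (\<lambda>k. case k of Inl i \<Rightarrow> V i | Inr i \<Rightarrow> W i)
                  (Inl ` {(1::nat)..} \<union> Inr ` {(1::nat)..})"
    and distV: "\<And>i. i \<ge> 1 \<Longrightarrow> distributed M lborel (V i) std_normal_density"
    and distW: "\<And>i. i \<ge> 1 \<Longrightarrow> distributed M lborel (W i) std_normal_density"
    and ab: "0 \<le> a" "a < b" "b \<le> 1"
    and sig: "sigma1 > 0" "sigma2 > 0"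
    and gam: "-pi \<le> gamma1" "gamma1 < pi" "-pi \<le> gamma2" "gamma2 < pi"
  defines "X1 \<equiv> \<lambda>i \<omega>. mu1 + sigma1 * (cos gamma1 * V i \<omega> + sin gamma1 * W i \<omega>)"
    and "X2 \<equiv> \<lambda>i \<omega>. mu2 + sigma2 * (cos gamma2 * V i \<omega> + sin gamma2 * W i \<omega>)"
  shows "conv_in_prob M (\<lambda>n \<omega>. trim_mean (\<lambda>i. V i \<omega>) (\<lambda>i. X1 i \<omega>) a b n)
           (mu1 + sigma1 * cos gamma1 * lam 1 a b)
       \<and> conv_in_prob M (\<lambda>n \<omega>. trim_mean (\<lambda>i. V i \<omega>) (\<lambda>i. X2 i \<omega>) a b n)
           (mu2 + sigma2 * cos gamma2 * lam 1 a b)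
       \<and> conv_in_prob M (\<lambda>n \<omega>. trim_cov (\<lambda>i. V i \<omega>) (\<lambda>i. X1 i \<omega>) (\<lambda>i. X2 i \<omega>) a b n)
           (sigma1 * sigma2 * (cos gamma1 * cos gamma2 * (lam 2 a b - (lam 1 a b)\<^sup>2)
                               + sin gamma1 * sin gamma2))"
proof -
  interpret setting2 M V W a b
    unfolding setting2_def setting2_axioms_def setting_def setting_axioms_def
    using assms(1) indep distV distW ab by auto
  define S where "S p q n \<omega> = (\<Sum>j\<in>{nat \<lfloor>real n * a\<rfloor>..<nat \<lfloor>real n * b\<rfloor>}.
       V (ord_idx (\<lambda>i. V i \<omega>) n ! j) \<omega> ^ p * W (ord_idx (\<lambda>i. V i \<omega>) n ! j) \<omega> ^ q) / real (m_n a b n)"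
    for p q :: nat and n \<omega>
  have cS: "conv_in_prob M (S p q) (lam p a b * EN (\<lambda>w. w ^ q))" for p q
  proof -
    have "conv_in_prob M (\<lambda>n \<omega>. (\<Sum>j\<in>{nat \<lfloor>real n * a\<rfloor>..<nat \<lfloor>real n * b\<rfloor>}.
       V (ord_idx (\<lambda>i. V i \<omega>) n ! j) \<omega> ^ p * W (ord_idx (\<lambda>i. V i \<omega>) n ! j) \<omega> ^ q) / real (m_n a b n))
       (EN (\<lambda>v. indicator (A_V a b) v * v ^ p) * EN (\<lambda>w. w ^ q) / (b - a))"
      by (rule trimmed_conv[OF goodf_pow goodf_pow goodf_ind_pow[OF A_V_measurable]])
    moreover have "EN (\<lambda>v. indicator (A_V a b) v * v ^ p) * EN (\<lambda>w. w ^ q) / (b - a) = lam p a b * EN (\<lambda>w. w ^ q)"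
      using EN_ind_pow[OF ab, of p] ab by simp
    moreover have "S p q = (\<lambda>n \<omega>. (\<Sum>j\<in>{nat \<lfloor>real n * a\<rfloor>..<nat \<lfloor>real n * b\<rfloor>}.
       V (ord_idx (\<lambda>i. V i \<omega>) n ! j) \<omega> ^ p * W (ord_idx (\<lambda>i. V i \<omega>) n ! j) \<omega> ^ q) / real (m_n a b n))"
      by (intro ext) (simp add: S_def)
    ultimately show ?thesis by simp
  qed
  have l0: "lam 0 a b = 1" by (rule lam0[OF ab])
  have mean_eq: "trim_mean (\<lambda>i. V i \<omega>) (\<lambda>i. mu + s * (cos g * V i \<omega> + sin g * W i \<omega>)) a b n
     = mu * S 0 0 n \<omega> + (s * cos g) * S 1 0 n \<omega> + (s * sin g) * S 0 1 n \<omega>" for mu s g n \<omega>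
  proof -
    let ?\<pi> = "ord_idx (\<lambda>i. V i \<omega>) n"
    have "trim_mean (\<lambda>i. V i \<omega>) (\<lambda>i. mu + s * (cos g * V i \<omega> + sin g * W i \<omega>)) a b n
       = (\<Sum>j\<in>{nat \<lfloor>real n * a\<rfloor>..<nat \<lfloor>real n * b\<rfloor>}. mu + (s * cos g) * V (?\<pi> ! j) \<omega> + (s * sin g) * W (?\<pi> ! j) \<omega>)
          / real (m_n a b n)"
      unfolding trim_mean_def conc_def trim_idx_def
      using reidx[of "\<lambda>j. mu + (s * cos g) * V (?\<pi> ! j) \<omega> + (s * sin g) * W (?\<pi> ! j) \<omega>"]
      by (simp add: algebra_simps)
    also have "\<dots> = mu * S 0 0 n \<omega> + (s * cos g) * S 1 0 n \<omega> + (s * sin g) * S 0 1 n \<omega>"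
      unfolding lin3 S_def by simp
    finally show ?thesis .
  qed
  have prod_eq: "(\<Sum>i\<in>trim_idx a b n. conc (\<lambda>i. V i \<omega>) (\<lambda>i. X1 i \<omega>) n i * conc (\<lambda>i. V i \<omega>) (\<lambda>i. X2 i \<omega>) n i)
        / real (m_n a b n)
     = mu1 * mu2 * S 0 0 n \<omega> + (mu1 * (sigma2 * cos gamma2) + (sigma1 * cos gamma1) * mu2) * S 1 0 n \<omega>
       + (mu1 * (sigma2 * sin gamma2) + (sigma1 * sin gamma1) * mu2) * S 0 1 n \<omega>
       + ((sigma1 * cos gamma1) * (sigma2 * cos gamma2)) * S 2 0 n \<omega>
       + ((sigma1 * cos gamma1) * (sigma2 * sin gamma2) + (sigma1 * sin gamma1) * (sigma2 * cos gamma2)) * S 1 1 n \<omega>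
       + ((sigma1 * sin gamma1) * (sigma2 * sin gamma2)) * S 0 2 n \<omega>" for n \<omega>
  proof -
    let ?\<pi> = "ord_idx (\<lambda>i. V i \<omega>) n"
    let ?f = "\<lambda>j. V (?\<pi> ! j) \<omega>" and ?g = "\<lambda>j. W (?\<pi> ! j) \<omega>"
    have eq1: "(\<Sum>i\<in>trim_idx a b n. conc (\<lambda>i. V i \<omega>) (\<lambda>i. X1 i \<omega>) n i * conc (\<lambda>i. V i \<omega>) (\<lambda>i. X2 i \<omega>) n i)
       = (\<Sum>j\<in>{nat \<lfloor>real n * a\<rfloor>..<nat \<lfloor>real n * b\<rfloor>}.
           (mu1 + (sigma1 * cos gamma1) * ?f j + (sigma1 * sin gamma1) * ?g j)
         * (mu2 + (sigma2 * cos gamma2) * ?f j + (sigma2 * sin gamma2) * ?g j))"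
      unfolding conc_def trim_idx_def X1_def X2_def
      using reidx[of "\<lambda>j. (mu1 + (sigma1 * cos gamma1) * ?f j + (sigma1 * sin gamma1) * ?g j)
         * (mu2 + (sigma2 * cos gamma2) * ?f j + (sigma2 * sin gamma2) * ?g j)"]
      by (simp add: algebra_simps)
    show ?thesis unfolding eq1 lin6 S_def by (simp add: power2_eq_square)
  qed
  have cov_eq: "trim_cov (\<lambda>i. V i \<omega>) (\<lambda>i. X1 i \<omega>) (\<lambda>i. X2 i \<omega>) a b n
     = (\<Sum>i\<in>trim_idx a b n. conc (\<lambda>i. V i \<omega>) (\<lambda>i. X1 i \<omega>) n i * conc (\<lambda>i. V i \<omega>) (\<lambda>i. X2 i \<omega>) n i)
        / real (m_n a b n)
       - trim_mean (\<lambda>i. V i \<omega>) (\<lambda>i. X1 i \<omega>) a b n * trim_mean (\<lambda>i. V i \<omega>) (\<lambda>i. X2 i \<omega>) a b n" for n \<omega>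
    unfolding trim_cov_def trim_mean_def
    by (rule cov_id) (auto simp: trim_idx_def m_n_def)
  have lm: "conv_in_prob M (\<lambda>n \<omega>. mu * S 0 0 n \<omega> + (s * cos g) * S 1 0 n \<omega> + (s * sin g) * S 0 1 n \<omega>)
      (mu + s * cos g * lam 1 a b)" for mu s g
  proof -
    have "conv_in_prob M (\<lambda>n \<omega>. mu * S 0 0 n \<omega> + (s * cos g) * S 1 0 n \<omega> + (s * sin g) * S 0 1 n \<omega>)
      (mu * (lam 0 a b * EN (\<lambda>w. w ^ 0)) + (s * cos g) * (lam 1 a b * EN (\<lambda>w. w ^ 0))
        + (s * sin g) * (lam 0 a b * EN (\<lambda>w. w ^ 1)))"
      by (intro cip_add cip_scale cS)
    thus ?thesis using l0 EN_w0 EN_w1 by simp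
  qed
  have c1: "conv_in_prob M (\<lambda>n \<omega>. trim_mean (\<lambda>i. V i \<omega>) (\<lambda>i. X1 i \<omega>) a b n) (mu1 + sigma1 * cos gamma1 * lam 1 a b)"
    by (rule cip_cong[OF lm]) (simp add: X1_def mean_eq)
  have c2: "conv_in_prob M (\<lambda>n \<omega>. trim_mean (\<lambda>i. V i \<omega>) (\<lambda>i. X2 i \<omega>) a b n) (mu2 + sigma2 * cos gamma2 * lam 1 a b)"
    by (rule cip_cong[OF lm]) (simp add: X2_def mean_eq)
  let ?A = "sigma1 * cos gamma1" and ?B = "sigma1 * sin gamma1" and ?C = "sigma2 * cos gamma2" and ?D = "sigma2 * sin gamma2"
  have cxy: "conv_in_prob M (\<lambda>n \<omega>. mu1 * mu2 * S 0 0 n \<omega> + (mu1 * ?C + ?A * mu2) * S 1 0 n \<omega>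
       + (mu1 * ?D + ?B * mu2) * S 0 1 n \<omega> + (?A * ?C) * S 2 0 n \<omega> + (?A * ?D + ?B * ?C) * S 1 1 n \<omega>
       + (?B * ?D) * S 0 2 n \<omega>)
     (mu1 * mu2 * (lam 0 a b * EN (\<lambda>w. w ^ 0)) + (mu1 * ?C + ?A * mu2) * (lam 1 a b * EN (\<lambda>w. w ^ 0))
       + (mu1 * ?D + ?B * mu2) * (lam 0 a b * EN (\<lambda>w. w ^ 1)) + (?A * ?C) * (lam 2 a b * EN (\<lambda>w. w ^ 0))
       + (?A * ?D + ?B * ?C) * (lam 1 a b * EN (\<lambda>w. w ^ 1)) + (?B * ?D) * (lam 0 a b * EN (\<lambda>w. w ^ 2)))"
    by (intro cip_add cip_scale cS)
  have ccov: "conv_in_prob M (\<lambda>n \<omega>. (mu1 * mu2 * S 0 0 n \<omega> + (mu1 * ?C + ?A * mu2) * S 1 0 n \<omega>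
       + (mu1 * ?D + ?B * mu2) * S 0 1 n \<omega> + (?A * ?C) * S 2 0 n \<omega> + (?A * ?D + ?B * ?C) * S 1 1 n \<omega>
       + (?B * ?D) * S 0 2 n \<omega>) - trim_mean (\<lambda>i. V i \<omega>) (\<lambda>i. X1 i \<omega>) a b n * trim_mean (\<lambda>i. V i \<omega>) (\<lambda>i. X2 i \<omega>) a b n)
     ((mu1 * mu2 * (lam 0 a b * EN (\<lambda>w. w ^ 0)) + (mu1 * ?C + ?A * mu2) * (lam 1 a b * EN (\<lambda>w. w ^ 0))
       + (mu1 * ?D + ?B * mu2) * (lam 0 a b * EN (\<lambda>w. w ^ 1)) + (?A * ?C) * (lam 2 a b * EN (\<lambda>w. w ^ 0))
       + (?A * ?D + ?B * ?C) * (lam 1 a b * EN (\<lambda>w. w ^ 1)) + (?B * ?D) * (lam 0 a b * EN (\<lambda>w. w ^ 2)))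
      - (mu1 + sigma1 * cos gamma1 * lam 1 a b) * (mu2 + sigma2 * cos gamma2 * lam 1 a b))"
    by (rule cip_diff[OF cxy cip_mult[OF c1 c2]])
  have c3: "conv_in_prob M (\<lambda>n \<omega>. trim_cov (\<lambda>i. V i \<omega>) (\<lambda>i. X1 i \<omega>) (\<lambda>i. X2 i \<omega>) a b n)
           (sigma1 * sigma2 * (cos gamma1 * cos gamma2 * (lam 2 a b - (lam 1 a b)\<^sup>2)
                               + sin gamma1 * sin gamma2))"
  proof (rule cip_eqc[OF cip_cong[OF ccov]])
    show "trim_cov (\<lambda>i. V i \<omega>) (\<lambda>i. X1 i \<omega>) (\<lambda>i. X2 i \<omega>) a b n = (mu1 * mu2 * S 0 0 n \<omega> + (mu1 * ?C + ?A * mu2) * S 1 0 n \<omega>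
       + (mu1 * ?D + ?B * mu2) * S 0 1 n \<omega> + (?A * ?C) * S 2 0 n \<omega> + (?A * ?D + ?B * ?C) * S 1 1 n \<omega>
       + (?B * ?D) * S 0 2 n \<omega>) - trim_mean (\<lambda>i. V i \<omega>) (\<lambda>i. X1 i \<omega>) a b n * trim_mean (\<lambda>i. V i \<omega>) (\<lambda>i. X2 i \<omega>) a b n"
      for n \<omega> unfolding cov_eq prod_eq ..
    show "(mu1 * mu2 * (lam 0 a b * EN (\<lambda>w. w ^ 0)) + (mu1 * ?C + ?A * mu2) * (lam 1 a b * EN (\<lambda>w. w ^ 0))
       + (mu1 * ?D + ?B * mu2) * (lam 0 a b * EN (\<lambda>w. w ^ 1)) + (?A * ?C) * (lam 2 a b * EN (\<lambda>w. w ^ 0))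
       + (?A * ?D + ?B * ?C) * (lam 1 a b * EN (\<lambda>w. w ^ 1)) + (?B * ?D) * (lam 0 a b * EN (\<lambda>w. w ^ 2)))
      - (mu1 + sigma1 * cos gamma1 * lam 1 a b) * (mu2 + sigma2 * cos gamma2 * lam 1 a b)
      = sigma1 * sigma2 * (cos gamma1 * cos gamma2 * (lam 2 a b - (lam 1 a b)\<^sup>2) + sin gamma1 * sin gamma2)"
      using l0 EN_w0 EN_w1 EN_w2 by (simp add: algebra_simps power2_eq_square)
  qed
  show ?thesis using c1 c2 c3 by blast
qed


end
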